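(* Let $N\ge1$, let $q\in\mathbb{C}$ with $[k]_q\ne0$ for $1\le k\le N$, and let $z_1,\dots,z_N$ lie in the open unit disk. Then $$\sum_{\sigma\in\mathbb{S}_N}\mathrm{sgn}(\sigma)\prod_{1\le i<j\le N}\big(z_{\sigma(i)}-qz_{\sigma(j)}-(1-q)z_{\sigma(i)}z_{\sigma(j)}\big)F^{(N)}_\sigma=\frac{\prod_{1\le i<j\le N}(z_i-z_j)}{\prod_{i=1}^N(1-z_i)}.$$
   Context: $[k]_q=1+q+\cdots+q^{k-1}$, $[k]_q!=[1]_q\cdots[k]_q$. For $w_1,\dots,w_N$ in the open unit disk define $t_i=\dfrac{w_1\cdots w_{N-i}}{1-w_1\cdots w_{N-i}}$ for $1\le i\le N-1$ and $$\Phi_N(w_1,\dots,w_N)=\frac{1}{1-w_1\cdots w_N}\sum_{(m_1,\dots,m_n)}\frac{1}{[m_1]_q!\cdots[m_n]_q!}\,t_{m_1}t_{m_1+m_2}\cdots t_{m_1+\cdots+m_{n-1}},$$ the sum running over all compositions $(m_1,\dots,m_n)$ of $N$ (ordered tuples of positive integers summing to $N$; for $n=1$ the product of $t$'s is $1$). $F^{(N)}_\sigma=\Phi_N(z_{\sigma(1)},\dots,z_{\sigma(N)})$. *)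

theory Defs
  imports Complex_Main "HOL-Combinatorics.Permutations"
begin

definition qint :: "complex \<Rightarrow> nat \<Rightarrow> complex" where
  "qint q k = (\<Sum>i<k. q ^ i)"

definition qfact :: "complex \<Rightarrow> nat \<Rightarrow> complex" where
  "qfact q k = (\<Prod>i=1..k. qint q i)"

definition compositions :: "nat \<Rightarrow> nat list set" where
  "compositions N = {ms. (\<forall>m\<in>set ms. 0 < m) \<and> sum_list ms = N}"

definition tvar :: "nat \<Rightarrow> (nat \<Rightarrow> complex) \<Rightarrow> nat \<Rightarrow> complex" where
  "tvar N w i = (\<Prod>j=1..N-i. w j) / (1 - (\<Prod>j=1..N-i. w j))"

definition Phi :: "nat \<Rightarrow> complex \<Rightarrow> (nat \<Rightarrow> complex) \<Rightarrow> complex" where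
  "Phi N q w = 1 / (1 - (\<Prod>j=1..N. w j)) *
     (\<Sum>ms\<in>compositions N.
        (1 / (\<Prod>m\<leftarrow>ms. qfact q m)) *
        (\<Prod>k<length ms - 1. tvar N w (sum_list (take (Suc k) ms))))"

definition Fsig :: "nat \<Rightarrow> complex \<Rightarrow> (nat \<Rightarrow> complex) \<Rightarrow> (nat \<Rightarrow> nat) \<Rightarrow> complex" where
  "Fsig N q z \<sigma> = Phi N q (\<lambda>i. z (\<sigma> i))"

end

theory Submission
  imports Defs "HOL-Combinatorics.Multiset_Permutations"
begin

definition rr :: "complex \<Rightarrow> (nat \<Rightarrow> complex) \<Rightarrow> nat \<Rightarrow> nat \<Rightarrow> complex" where
  "rr q x a b = (x a - q * x b) / (x a - x b)"
definition rho1 :: "complex \<Rightarrow> (nat \<Rightarrow> complex) \<Rightarrow> nat set \<Rightarrow> nat \<Rightarrow> complex" where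
  "rho1 q x S b = (\<Prod>b'\<in>S-{b}. rr q x b b')"
definition rho2 :: "complex \<Rightarrow> (nat \<Rightarrow> complex) \<Rightarrow> nat set \<Rightarrow> nat \<Rightarrow> complex" where
  "rho2 q x S a = (\<Prod>u\<in>S-{a}. rr q x u a)"

lemma rho1_insert: "finite S \<Longrightarrow> c \<notin> S \<Longrightarrow> b \<in> S \<Longrightarrow> rho1 q x (insert c S) b = rho1 q x S b * rr q x b c"
  unfolding rho1_def
  by (subst insert_Diff_if) (auto simp: mult.commute)
lemma rho1_insert_self: "c \<notin> S \<Longrightarrow> rho1 q x (insert c S) c = (\<Prod>b\<in>S. rr q x c b)"
  unfolding rho1_def by simp
lemma rho2_insert: "finite S \<Longrightarrow> c \<notin> S \<Longrightarrow> b \<in> S \<Longrightarrow> rho2 q x (insert c S) b = rho2 q x S b * rr q x c b"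
  unfolding rho2_def
  by (subst insert_Diff_if) (auto simp: mult.commute)
lemma rho2_insert_self: "c \<notin> S \<Longrightarrow> rho2 q x (insert c S) c = (\<Prod>b\<in>S. rr q x b c)"
  unfolding rho2_def by simp

lemma pf1: fixes a c y q :: complex
  assumes "a \<noteq> c" "a \<noteq> y" "c \<noteq> y"
  shows "(a - q*c)/(a - c) * a/(a - y) = (y - q*c)/(y - c) * (a/(a-y)) + ((1-q)*c/(c - y)) * (a/(a - c))"
proof -
  have h: "a - c \<noteq> 0" "a - y \<noteq> 0" "c - y \<noteq> 0" "y - c \<noteq> 0" using assms by auto
  show ?thesis
    using assms apply (simp add: divide_simps h)
    apply (simp add: algebra_simps)
    done
qed

lemma pf2: fixes c y q P Pc :: complex
  assumes "c \<noteq> y"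
  shows "(y - q * c)/(y - c) * P = 1 - ((y - q * c)/(y - c) * (1 - P) + ((1-q)*c/(c - y)) * (1 - Pc) + (1-q)*Pc * c / (c - y))"
proof -
  have h: "c - y \<noteq> 0" "y - c \<noteq> 0" using assms by auto
  show ?thesis
    using assms apply (simp add: divide_simps h)
    apply (simp add: algebra_simps)
    done
qed

lemma L1:
  assumes "finite S" "inj_on x S" "y \<notin> x ` S"
  shows "(\<Prod>b\<in>S. (y - q*x b)/(y - x b)) = 1 - (1-q) * (\<Sum>b\<in>S. rho1 q x S b * x b / (x b - y))"
  using assms
proof (induction S arbitrary: y rule: finite_induct)
  case empty
  then show ?case by simp
next
  case (insert c S)
  have injS: "inj_on x S" and xc: "x c \<notin> x ` S" using insert by auto
  have yS: "y \<notin> x ` S" and yc: "y \<noteq> x c" using insert by auto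
  define Py where "Py = (\<Prod>b\<in>S. (y - q*x b)/(y - x b))"
  define Pc where "Pc = (\<Prod>b\<in>S. (x c - q*x b)/(x c - x b))"
  define Sy where "Sy = (\<Sum>b\<in>S. rho1 q x S b * x b / (x b - y))"
  define Sc where "Sc = (\<Sum>b\<in>S. rho1 q x S b * x b / (x b - x c))"
  have IHy: "(1-q)*Sy = 1 - Py" using insert.IH[OF injS yS] unfolding Py_def Sy_def by simp
  have IHc: "(1-q)*Sc = 1 - Pc" using insert.IH[OF injS xc] unfolding Pc_def Sc_def by simp
  define \<alpha> where "\<alpha> = (y - q * x c)/(y - x c)"
  define \<beta> where "\<beta> = (1-q) * x c/(x c - y)"
  have pw: "rho1 q x (insert c S) b * x b / (x b - y) = \<alpha> * (rho1 q x S b * x b / (x b - y)) + \<beta> * (rho1 q x S b * x b / (x b - x c))"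
    if b: "b \<in> S" for b
  proof -
    have d1: "x b \<noteq> x c" "x b \<noteq> y" using b xc yS by (metis image_eqI)+
    have d2: "x c - y \<noteq> 0" "y - x c \<noteq> 0" using yc by auto
    have "rho1 q x (insert c S) b * x b / (x b - y) = rho1 q x S b * ((x b - q * x c)/(x b - x c) * x b/(x b - y))"
      unfolding rho1_insert[OF insert.hyps b] rr_def by simp
    also have "\<dots> = rho1 q x S b * ((y - q*x c)/(y - x c) * (x b/(x b-y)) + ((1-q)*x c/(x c - y)) * (x b/(x b - x c)))"
      using pf1[of "x b" "x c" y q] d1 yc by simp
    finally show ?thesis unfolding \<alpha>_def \<beta>_def by (simp add: algebra_simps)
  qed
  have sumS: "(\<Sum>b\<in>S. rho1 q x (insert c S) b * x b / (x b - y)) = \<alpha> * Sy + \<beta> * Sc"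
    unfolding Sy_def Sc_def by (simp add: pw sum.distrib sum_distrib_left)
  have self: "rho1 q x (insert c S) c = Pc"
    unfolding rho1_insert_self[OF insert.hyps(2)] Pc_def rr_def by simp
  have "(\<Sum>b\<in>insert c S. rho1 q x (insert c S) b * x b / (x b - y)) = \<alpha> * Sy + \<beta> * Sc + Pc * x c / (x c - y)"
    using insert.hyps by (simp add: sumS self)
  moreover have "(\<Prod>b\<in>insert c S. (y - q*x b)/(y - x b)) = (y - q * x c)/(y - x c) * Py"
    using insert.hyps unfolding Py_def by simp
  moreover have "(y - q * x c)/(y - x c) * Py = 1 - (1-q) * (\<alpha> * Sy + \<beta> * Sc + Pc * x c / (x c - y))"
  proof -
    have "(1-q) * (\<alpha> * Sy + \<beta> * Sc + Pc * x c / (x c - y)) = \<alpha> * ((1-q)*Sy) + ((1-q)*x c/(x c - y)) * ((1-q)*Sc) + (1-q)*Pc * x c / (x c - y)"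
      unfolding \<beta>_def by (simp add: algebra_simps)
    also have "\<dots> = \<alpha> * (1 - Py) + ((1-q)*x c/(x c - y)) * (1 - Pc) + (1-q)*Pc * x c / (x c - y)"
      by (simp add: IHy IHc)
    finally have e: "(1-q) * (\<alpha> * Sy + \<beta> * Sc + Pc * x c / (x c - y)) = \<alpha> * (1 - Py) + ((1-q)*x c/(x c - y)) * (1 - Pc) + (1-q)*Pc * x c / (x c - y)" .
    show ?thesis unfolding e unfolding \<alpha>_def using pf2[of "x c" y q Py Pc] yc by simp
  qed
  ultimately show ?case by simp
qed

lemma pf3: fixes a c y q :: complex
  assumes "a \<noteq> c" "a \<noteq> y" "c \<noteq> y"
  shows "(c - q*a)/(c - a) * (1/(a - y)) = (c - q*y)/(c - y) * (1/(a-y)) + (-(1-q)*c/(c - y)) * (1/(a - c))"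
proof -
  have h: "a - c \<noteq> 0" "a - y \<noteq> 0" "c - y \<noteq> 0" "y - c \<noteq> 0" "c - a \<noteq> 0" using assms by auto
  show ?thesis
    using assms apply (simp add: divide_simps h)
    apply (simp add: algebra_simps)
    done
qed

lemma pf4: fixes c y q P Pc :: complex
  assumes "c \<noteq> y"
  shows "(c - q * y)/(c - y) * P = 1 + ((c - q*y)/(c-y)*(P-1) - (1-q)*y/(c-y)*(Pc - 1) + (1-q)*y*Pc/(c-y))"
proof -
  have h: "c - y \<noteq> 0" "y - c \<noteq> 0" using assms by auto
  show ?thesis
    using assms apply (simp add: divide_simps h)
    apply (simp add: algebra_simps)
    done
qed

lemma L2:
  assumes "finite S" "inj_on x S" "y \<notin> x ` S"
  shows "(\<Prod>a\<in>S. (x a - q*y)/(x a - y)) = 1 + (1-q) * y * (\<Sum>a\<in>S. rho2 q x S a / (x a - y))"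
  using assms
proof (induction S arbitrary: y rule: finite_induct)
  case empty
  then show ?case by simp
next
  case (insert c S)
  have injS: "inj_on x S" and xc: "x c \<notin> x ` S" using insert by auto
  have yS: "y \<notin> x ` S" and yc: "y \<noteq> x c" using insert by auto
  define Py where "Py = (\<Prod>a\<in>S. (x a - q*y)/(x a - y))"
  define Pc where "Pc = (\<Prod>a\<in>S. (x a - q*x c)/(x a - x c))"
  define Ty where "Ty = (\<Sum>a\<in>S. rho2 q x S a / (x a - y))"
  define Tc where "Tc = (\<Sum>a\<in>S. rho2 q x S a / (x a - x c))"
  have IHy: "(1-q)*y*Ty = Py - 1" using insert.IH[OF injS yS] unfolding Py_def Ty_def by simp
  have IHc: "(1-q)*x c*Tc = Pc - 1" using insert.IH[OF injS xc] unfolding Pc_def Tc_def by simp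
  define \<alpha> where "\<alpha> = (x c - q * y)/(x c - y)"
  define \<beta> where "\<beta> = -(1-q) * x c/(x c - y)"
  have pw: "rho2 q x (insert c S) a / (x a - y) = \<alpha> * (rho2 q x S a / (x a - y)) + \<beta> * (rho2 q x S a / (x a - x c))"
    if b: "a \<in> S" for a
  proof -
    have d1: "x a \<noteq> x c" "x a \<noteq> y" using b xc yS by (metis image_eqI)+
    have "rho2 q x (insert c S) a / (x a - y) = rho2 q x S a * ((x c - q * x a)/(x c - x a) * (1/(x a - y)))"
      unfolding rho2_insert[OF insert.hyps b] rr_def by simp
    also have "\<dots> = rho2 q x S a * ((x c - q*y)/(x c - y) * (1/(x a-y)) + (-(1-q)*x c/(x c - y)) * (1/(x a - x c)))"
      using pf3[of "x a" "x c" y q] d1 yc by simp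
    finally show ?thesis unfolding \<alpha>_def \<beta>_def by (simp add: algebra_simps)
  qed
  have sumS: "(\<Sum>a\<in>S. rho2 q x (insert c S) a / (x a - y)) = \<alpha> * Ty + \<beta> * Tc"
    unfolding Ty_def Tc_def by (simp add: pw sum.distrib sum_distrib_left)
  have self: "rho2 q x (insert c S) c = Pc"
    unfolding rho2_insert_self[OF insert.hyps(2)] Pc_def rr_def by simp
  have "(\<Sum>a\<in>insert c S. rho2 q x (insert c S) a / (x a - y)) = \<alpha> * Ty + \<beta> * Tc + Pc / (x c - y)"
    using insert.hyps by (simp add: sumS self)
  moreover have "(\<Prod>a\<in>insert c S. (x a - q*y)/(x a - y)) = (x c - q * y)/(x c - y) * Py"
    using insert.hyps unfolding Py_def by simp
  moreover have "(x c - q * y)/(x c - y) * Py = 1 + (1-q) * y * (\<alpha> * Ty + \<beta> * Tc + Pc / (x c - y))"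
  proof -
    have "(1-q) * y * (\<alpha> * Ty + \<beta> * Tc + Pc / (x c - y)) = \<alpha> * ((1-q)*y*Ty) - ((1-q)*y/(x c - y)) * ((1-q)*x c*Tc) + (1-q)*y*Pc / (x c - y)"
      unfolding \<beta>_def by (simp add: divide_inverse algebra_simps)
    also have "\<dots> = \<alpha> * (Py - 1) - ((1-q)*y/(x c - y)) * (Pc - 1) + (1-q)*y*Pc / (x c - y)"
      by (simp add: IHy IHc)
    finally have e: "(1-q) * y * (\<alpha> * Ty + \<beta> * Tc + Pc / (x c - y)) = \<alpha> * (Py - 1) - ((1-q)*y/(x c - y)) * (Pc - 1) + (1-q)*y*Pc / (x c - y)" .
    show ?thesis unfolding e unfolding \<alpha>_def using pf4[of "x c" y q Py Pc] yc by simp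
  qed
  ultimately show ?case by simp
qed

lemma qint_Suc': "qint q (Suc n) = 1 + q * qint q n"
  unfolding qint_def by (subst sum.lessThan_Suc_shift) (simp add: sum_distrib_left)

lemma pf5: fixes a c q :: complex
  assumes "a \<noteq> c"
  shows "(a - q*c)/(a - c) = q + (1-q)*(a/(a - c))"
proof -
  have h: "a - c \<noteq> 0" using assms by auto
  show ?thesis
    using assms apply (simp add: divide_simps h)
    apply (simp add: algebra_simps)
    done
qed

lemma Jsum:
  assumes "finite S" "inj_on x S"
  shows "(\<Sum>a\<in>S. rho1 q x S a) = qint q (card S)"
  using assms
proof (induction S rule: finite_induct)
  case empty
  then show ?case by (simp add: qint_def)
next
  case (insert c S)
  have injS: "inj_on x S" and xc: "x c \<notin> x ` S" using insert by auto
  define Sc where "Sc = (\<Sum>b\<in>S. rho1 q x S b * x b / (x b - x c))"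
  have Lc: "(\<Prod>b\<in>S. (x c - q*x b)/(x c - x b)) = 1 - (1-q) * Sc"
    using L1[OF insert.hyps(1) injS xc] unfolding Sc_def by simp
  have pw: "rho1 q x (insert c S) a = q * rho1 q x S a + (1-q) * (rho1 q x S a * x a / (x a - x c))" if a: "a \<in> S" for a
  proof -
    have d1: "x a \<noteq> x c" using a xc by (metis image_eqI)
    show ?thesis unfolding rho1_insert[OF insert.hyps a] rr_def pf5[OF d1] by (simp add: algebra_simps)
  qed
  have "(\<Sum>a\<in>insert c S. rho1 q x (insert c S) a) = (\<Sum>a\<in>S. rho1 q x (insert c S) a) + rho1 q x (insert c S) c"
    using insert.hyps by simp
  also have "(\<Sum>a\<in>S. rho1 q x (insert c S) a) = q * (\<Sum>a\<in>S. rho1 q x S a) + (1-q) * Sc"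
    by (simp add: pw sum.distrib sum_distrib_left Sc_def)
  also have "rho1 q x (insert c S) c = 1 - (1-q)*Sc"
    unfolding rho1_insert_self[OF insert.hyps(2)] using Lc by (simp add: rr_def)
  also have "q * (\<Sum>a\<in>S. rho1 q x S a) + (1-q) * Sc + (1 - (1-q)*Sc) = q * qint q (card S) + 1"
    using insert.IH[OF injS] by simp
  also have "\<dots> = qint q (card (insert c S))"
    using insert.hyps by (simp add: qint_Suc')
  finally show ?case .
qed


definition Th :: "complex \<Rightarrow> (nat \<Rightarrow> complex) \<Rightarrow> nat set \<Rightarrow> nat set \<Rightarrow> complex" where
  "Th q x S T = (\<Prod>a\<in>T. \<Prod>b\<in>S-T. rr q x a b)"
definition Xp :: "(nat \<Rightarrow> complex) \<Rightarrow> nat set \<Rightarrow> complex" where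
  "Xp x T = (\<Prod>a\<in>T. x a)"

lemma Th_insert_out:
  assumes "finite S" "c \<notin> S" "T \<subseteq> S"
  shows "Th q x (insert c S) T = Th q x S T * (\<Prod>a\<in>T. rr q x a c)"
proof -
  have "insert c S - T = insert c (S - T)" using assms by auto
  moreover have "finite (S - T)" "c \<notin> S - T" using assms by auto
  ultimately show ?thesis unfolding Th_def by (simp add: prod.distrib)
qed

lemma Th_insert_in:
  assumes "finite S" "c \<notin> S" "T \<subseteq> S"
  shows "Th q x (insert c S) (insert c T) = Th q x S T * (\<Prod>b\<in>S-T. rr q x c b)"
proof -
  have "insert c S - insert c T = S - T" using assms by auto
  moreover have "finite T" "c \<notin> T" using assms finite_subset by auto
  ultimately show ?thesis unfolding Th_def by (simp add: mult.commute)
qed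

lemma Th_move:
  assumes "finite S" "T \<subseteq> S" "b \<in> S - T"
  shows "Th q x S (insert b T) * rho2 q x (insert b T) b = Th q x S T * rho1 q x (S - T) b"
proof -
  have fT: "finite T" using assms finite_subset by auto
  have bT: "b \<notin> T" using assms by auto
  have e1: "S - insert b T = (S - T) - {b}" by auto
  have "Th q x S (insert b T) = (\<Prod>b'\<in>(S-T)-{b}. rr q x b b') * (\<Prod>a\<in>T. \<Prod>b'\<in>(S-T)-{b}. rr q x a b')"
    unfolding Th_def e1 using fT bT by simp
  moreover have "rho2 q x (insert b T) b = (\<Prod>u\<in>T. rr q x u b)"
    unfolding rho2_def using bT by simp
  moreover have "Th q x S T = (\<Prod>a\<in>T. rr q x a b * (\<Prod>b'\<in>(S-T)-{b}. rr q x a b'))"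
    unfolding Th_def
    by (rule prod.cong[OF refl], rule prod.remove) (use assms in auto)
  moreover have "rho1 q x (S - T) b = (\<Prod>b'\<in>(S-T)-{b}. rr q x b b')"
    unfolding rho1_def ..
  ultimately show ?thesis by (simp add: prod.distrib mult_ac)
qed

lemma Rstar:
  assumes "finite S" "inj_on x S"
  shows "(\<Sum>T\<in>Pow S. Xp x T * Th q x S T) = (\<Prod>a\<in>S. 1 + x a)"
  using assms
proof (induction S rule: finite_induct)
  case empty
  then show ?case by (simp add: Xp_def Th_def)
next
  case (insert c S)
  have injS: "inj_on x S" and xc: "x c \<notin> x ` S" using insert by auto
  define A1 where "A1 T = (\<Sum>a\<in>T. rho2 q x T a / (x a - x c))" for T
  define B1 where "B1 U = (\<Sum>b\<in>U. rho1 q x U b * x b / (x b - x c))" for U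
  have PA: "(\<Prod>a\<in>T. rr q x a c) = 1 + (1-q) * x c * A1 T" if "T \<subseteq> S" for T
  proof -
    have "finite T" "inj_on x T" "x c \<notin> x ` T" using that insert.hyps injS xc finite_subset inj_on_subset by blast+
    from L2[OF this, of q] show ?thesis unfolding A1_def rr_def by simp
  qed
  have PB: "(\<Prod>b\<in>S-T. rr q x c b) = 1 - (1-q) * B1 (S-T)" for T
  proof -
    have "finite (S-T)" "inj_on x (S-T)" "x c \<notin> x ` (S-T)" using insert.hyps xc inj_on_subset[OF injS] by auto
    from L1[OF this, of q] show ?thesis unfolding B1_def rr_def by simp
  qed
  define F where "F T = Xp x T * Th q x S T" for T
  have fP: "finite (Pow S)" using insert.hyps by simp
  have inj: "inj_on (insert c) (Pow S)" using insert.hyps by (auto simp: inj_on_def)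
  have disj: "Pow S \<inter> insert c ` Pow S = {}" using insert.hyps by auto
  have key: "(\<Sum>T\<in>Pow S. F T * A1 T) = (\<Sum>T\<in>Pow S. F T * B1 (S - T))"
  proof -
    have "(\<Sum>T\<in>Pow S. F T * A1 T) = (\<Sum>(T,a)\<in>Sigma (Pow S) (\<lambda>T. T). F T * (rho2 q x T a / (x a - x c)))"
      unfolding A1_def sum_distrib_left using fP by (subst sum.Sigma) (auto intro: finite_subset insert.hyps)
    also have "\<dots> = (\<Sum>(T,b)\<in>Sigma (Pow S) (\<lambda>T. S - T). F T * (rho1 q x (S - T) b * x b / (x b - x c)))"
    proof (rule sym, rule sum.reindex_bij_witness[where i = "\<lambda>(T,a). (T - {a}, a)" and j = "\<lambda>(T,b). (insert b T, b)"])
      fix p assume "p \<in> Sigma (Pow S) (\<lambda>T. S - T)"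
      then obtain T b where p: "p = (T,b)" "T \<subseteq> S" "b \<in> S - T" by auto
      then show "(\<lambda>(T, a). (T - {a}, a)) ((\<lambda>(T, b). (insert b T, b)) p) = p" by auto
      show "(\<lambda>(T, b). (insert b T, b)) p \<in> Sigma (Pow S) (\<lambda>T. T)" using p by auto
    next
      fix p assume "p \<in> Sigma (Pow S) (\<lambda>T. T)"
      then obtain T a where p: "p = (T,a)" "T \<subseteq> S" "a \<in> T" by auto
      then show "(\<lambda>(T, b). (insert b T, b)) ((\<lambda>(T, a). (T - {a}, a)) p) = p" by (auto simp: insert_absorb)
      show "(\<lambda>(T, a). (T - {a}, a)) p \<in> Sigma (Pow S) (\<lambda>T. S - T)" using p by auto
    next
      fix p assume "p \<in> Sigma (Pow S) (\<lambda>T. S - T)"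
      then obtain T b where p: "p = (T,b)" "T \<subseteq> S" "b \<in> S - T" by auto
      have "F (insert b T) * (rho2 q x (insert b T) b / (x b - x c)) = Xp x (insert b T) * (Th q x S (insert b T) * rho2 q x (insert b T) b) / (x b - x c)"
        unfolding F_def by simp
      also have "\<dots> = x b * Xp x T * (Th q x S T * rho1 q x (S - T) b) / (x b - x c)"
        using p insert.hyps finite_subset unfolding Th_move[OF insert.hyps(1) p(2,3)] Xp_def
        by (subst prod.insert) auto
      also have "\<dots> = F T * (rho1 q x (S - T) b * x b / (x b - x c))" unfolding F_def by simp
      finally show "(\<lambda>(T, a). F T * (rho2 q x T a / (x a - x c))) ((\<lambda>(T, b). (insert b T, b)) p) =
         (\<lambda>(T, b). F T * (rho1 q x (S - T) b * x b / (x b - x c))) p" using p by simp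
    qed
    also have "\<dots> = (\<Sum>T\<in>Pow S. F T * B1 (S - T))"
      unfolding B1_def sum_distrib_left using fP by (subst sum.Sigma) (auto intro: finite_subset insert.hyps)
    finally show ?thesis .
  qed
  have "(\<Sum>T\<in>Pow (insert c S). Xp x T * Th q x (insert c S) T)
        = (\<Sum>T\<in>Pow S. Xp x T * Th q x (insert c S) T) + (\<Sum>T\<in>Pow S. Xp x (insert c T) * Th q x (insert c S) (insert c T))"
    unfolding Pow_insert using fP inj disj
    by (simp add: sum.union_disjoint sum.reindex)
  also have "(\<Sum>T\<in>Pow S. Xp x T * Th q x (insert c S) T) = (\<Sum>T\<in>Pow S. F T + (1-q) * x c * (F T * A1 T))"
    by (rule sum.cong[OF refl]) (simp add: Th_insert_out[OF insert.hyps] PA F_def algebra_simps)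
  also have "(\<Sum>T\<in>Pow S. Xp x (insert c T) * Th q x (insert c S) (insert c T)) = (\<Sum>T\<in>Pow S. x c * F T - (1-q) * x c * (F T * B1 (S - T)))"
  proof (rule sum.cong[OF refl])
    fix T assume T: "T \<in> Pow S"
    have "c \<notin> T" "finite T" using T insert.hyps finite_subset by auto
    then have "Xp x (insert c T) = x c * Xp x T" unfolding Xp_def by simp
    then show "Xp x (insert c T) * Th q x (insert c S) (insert c T) = x c * F T - (1-q) * x c * (F T * B1 (S - T))"
      using T by (simp add: Th_insert_in[OF insert.hyps] PB F_def algebra_simps)
  qed
  also have "(\<Sum>T\<in>Pow S. F T + (1-q) * x c * (F T * A1 T)) + (\<Sum>T\<in>Pow S. x c * F T - (1-q) * x c * (F T * B1 (S - T)))
      = (\<Sum>T\<in>Pow S. F T) + (1-q) * x c * (\<Sum>T\<in>Pow S. F T * A1 T) + (x c * (\<Sum>T\<in>Pow S. F T) - (1-q) * x c * (\<Sum>T\<in>Pow S. F T * B1 (S - T)))"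
    by (simp add: sum.distrib sum_subtractf sum_distrib_left)
  also have "\<dots> = (1 + x c) * (\<Sum>T\<in>Pow S. F T)" using key by (simp add: algebra_simps)
  also have "\<dots> = (\<Prod>a\<in>insert c S. 1 + x a)" using insert.IH[OF injS] insert.hyps by (simp add: F_def)
  finally show ?case .
qed

fun Rl :: "complex \<Rightarrow> (nat \<Rightarrow> complex) \<Rightarrow> nat list \<Rightarrow> complex" where
  "Rl q x [] = 1"
| "Rl q x (a # L) = (\<Prod>b\<leftarrow>L. rr q x a b) * Rl q x L"

lemma Rl_append: "Rl q x (L1 @ L2) = Rl q x L1 * Rl q x L2 * (\<Prod>a\<leftarrow>L1. \<Prod>b\<leftarrow>L2. rr q x a b)"
  by (induction L1) (auto simp: mult_ac)

lemma Rl_append_pos: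
  assumes "L1 \<in> permutations_of_set T" "L2 \<in> permutations_of_set (S - T)"
  shows "Rl q x (L1 @ L2) = Rl q x L1 * Rl q x L2 * Th q x S T"
proof -
  have d: "distinct L1" "distinct L2" "set L1 = T" "set L2 = S - T"
    using assms by (auto simp: permutations_of_set_def)
  have e2: "(\<Prod>b\<leftarrow>L2. rr q x a b) = (\<Prod>b\<in>S-T. rr q x a b)" for a
    using d by (metis prod.distinct_set_conv_list)
  have "(\<Prod>a\<leftarrow>L1. \<Prod>b\<leftarrow>L2. rr q x a b) = (\<Prod>a\<leftarrow>L1. \<Prod>b\<in>S-T. rr q x a b)"
    by (simp only: e2)
  also have "\<dots> = (\<Prod>a\<in>T. \<Prod>b\<in>S-T. rr q x a b)"
    using d by (metis prod.distinct_set_conv_list)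
  finally have "(\<Prod>a\<leftarrow>L1. \<Prod>b\<leftarrow>L2. rr q x a b) = (\<Prod>a\<in>T. \<Prod>b\<in>S-T. rr q x a b)" .
  then show ?thesis unfolding Rl_append Th_def by simp
qed

lemma pos_split_first:
  assumes "finite S" "S \<noteq> {}"
  shows "(\<Sum>L\<in>permutations_of_set S. f L) = (\<Sum>a\<in>S. \<Sum>L\<in>permutations_of_set (S - {a}). f (a # L))"
proof -
  have e: "permutations_of_set S = (\<lambda>(a,L). a # L) ` Sigma S (\<lambda>a. permutations_of_set (S - {a}))"
    unfolding permutations_of_set_nonempty[OF assms(2)] by auto
  have inj: "inj_on (\<lambda>(a,L). a # L) (Sigma S (\<lambda>a. permutations_of_set (S - {a})))"
    by (auto simp: inj_on_def)
  show ?thesis unfolding e using assms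
    by (subst sum.reindex[OF inj]) (simp add: sum.Sigma split_def)
qed

lemma qfact_Suc: "qfact q (Suc n) = qint q (Suc n) * qfact q n"
  unfolding qfact_def by (simp add: prod.nat_ivl_Suc' mult.commute)

lemma Qsym:
  assumes "finite S" "inj_on x S"
  shows "(\<Sum>L\<in>permutations_of_set S. Rl q x L) = qfact q (card S)"
  using assms
proof (induction "card S" arbitrary: S)
  case 0
  then have "S = {}" by simp
  then show ?case by (simp add: qfact_def)
next
  case (Suc n)
  have ne: "S \<noteq> {}" using Suc.hyps(2) by auto
  have "(\<Sum>L\<in>permutations_of_set S. Rl q x L) = (\<Sum>a\<in>S. \<Sum>L\<in>permutations_of_set (S - {a}). (\<Prod>b\<leftarrow>L. rr q x a b) * Rl q x L)"
    using pos_split_first[OF Suc.prems(1) ne, of "Rl q x"] by simp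
  also have "\<dots> = (\<Sum>a\<in>S. rho1 q x S a * qfact q n)"
  proof (rule sum.cong[OF refl])
    fix a assume a: "a \<in> S"
    have c: "card (S - {a}) = n" using Suc.hyps(2) a Suc.prems by simp
    have IH: "(\<Sum>L\<in>permutations_of_set (S - {a}). Rl q x L) = qfact q n"
      using Suc.hyps(1)[of "S - {a}"] c Suc.prems inj_on_subset[OF Suc.prems(2)] by auto
    have "(\<Sum>L\<in>permutations_of_set (S - {a}). (\<Prod>b\<leftarrow>L. rr q x a b) * Rl q x L)
        = (\<Sum>L\<in>permutations_of_set (S - {a}). rho1 q x S a * Rl q x L)"
      by (rule sum.cong[OF refl]) (auto simp: rho1_def permutations_of_set_def prod.distinct_set_conv_list[symmetric])
    also have "\<dots> = rho1 q x S a * qfact q n"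
      by (simp add: sum_distrib_left[symmetric] IH)
    finally show "(\<Sum>L\<in>permutations_of_set (S - {a}). (\<Prod>b\<leftarrow>L. rr q x a b) * Rl q x L) = rho1 q x S a * qfact q n" .
  qed
  also have "\<dots> = qint q (Suc n) * qfact q n"
    using Jsum[OF Suc.prems] Suc.hyps(2) by (simp add: sum_distrib_right[symmetric])
  finally show ?case using Suc.hyps(2)[symmetric] by (simp add: qfact_Suc)
qed

lemma pos_split:
  assumes "finite S" "i \<le> card S"
  shows "(\<Sum>L\<in>permutations_of_set S. f L) =
    (\<Sum>T\<in>{T. T \<subseteq> S \<and> card T = i}. \<Sum>L1\<in>permutations_of_set T. \<Sum>L2\<in>permutations_of_set (S - T). f (L1 @ L2))"
proof -
  have fT: "finite {T. T \<subseteq> S \<and> card T = i}" using assms by simp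
  have "(\<Sum>T\<in>{T. T \<subseteq> S \<and> card T = i}. \<Sum>L1\<in>permutations_of_set T. \<Sum>L2\<in>permutations_of_set (S - T). f (L1 @ L2))
      = (\<Sum>(T,LL)\<in>Sigma {T. T \<subseteq> S \<and> card T = i} (\<lambda>T. permutations_of_set T \<times> permutations_of_set (S - T)). f (fst LL @ snd LL))"
    using fT by (simp add: sum.Sigma sum.cartesian_product split_def)
  also have "\<dots> = (\<Sum>L\<in>permutations_of_set S. f L)"
  proof (rule sum.reindex_bij_witness[where i = "\<lambda>L. (set (take i L), (take i L, drop i L))" and j = "\<lambda>(T,LL). fst LL @ snd LL"])
    fix p assume "p \<in> Sigma {T. T \<subseteq> S \<and> card T = i} (\<lambda>T. permutations_of_set T \<times> permutations_of_set (S - T))"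
    then obtain T L1 L2 where p: "p = (T,(L1,L2))" "T \<subseteq> S" "card T = i" "L1 \<in> permutations_of_set T" "L2 \<in> permutations_of_set (S - T)"
      by auto
    then have d: "distinct L1" "distinct L2" "set L1 = T" "set L2 = S - T" "length L1 = i"
      by (auto simp: permutations_of_set_def distinct_card)
    show "(\<lambda>L. (set (take i L), take i L, drop i L)) ((\<lambda>(T, LL). fst LL @ snd LL) p) = p"
      using p d by auto
    show "(\<lambda>(T, LL). fst LL @ snd LL) p \<in> permutations_of_set S"
      using p d by (auto simp: permutations_of_set_def)
  next
    fix L assume L: "L \<in> permutations_of_set S"
    then have d: "distinct L" "set L = S" "length L = card S" by (auto simp: permutations_of_set_def distinct_card)
    have dt: "distinct (take i L)" "distinct (drop i L)" using d by auto
    have u: "set (take i L) \<union> set (drop i L) = S" using d by (metis set_append append_take_drop_id)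
    have di: "set (take i L) \<inter> set (drop i L) = {}" using d(1) by (metis distinct_append append_take_drop_id)
    have st: "set (drop i L) = S - set (take i L)" using u di by blast
    have sub: "set (take i L) \<subseteq> S" using u by blast
    have ct: "card (set (take i L)) = i" using dt d assms by (simp add: distinct_card)
    show "(\<lambda>(T, LL). fst LL @ snd LL) ((\<lambda>L. (set (take i L), take i L, drop i L)) L) = L" by simp
    show "(\<lambda>L. (set (take i L), take i L, drop i L)) L \<in> Sigma {T. T \<subseteq> S \<and> card T = i} (\<lambda>T. permutations_of_set T \<times> permutations_of_set (S - T))"
      using dt st ct sub by (simp add: permutations_of_set_def)
  next
    fix p assume "p \<in> Sigma {T. T \<subseteq> S \<and> card T = i} (\<lambda>T. permutations_of_set T \<times> permutations_of_set (S - T))"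
    then obtain T L1 L2 where p: "p = (T,(L1,L2))" by auto
    show "f ((\<lambda>(T, LL). fst LL @ snd LL) p) = (\<lambda>(T, LL). f (fst LL @ snd LL)) p" using p by simp
  qed
  finally show ?thesis by simp
qed


definition uL :: "(nat \<Rightarrow> complex) \<Rightarrow> nat list \<Rightarrow> complex" where
  "uL z L = prod_list (map z L) / (1 - prod_list (map z L))"

function Af :: "complex \<Rightarrow> (nat \<Rightarrow> complex) \<Rightarrow> nat list \<Rightarrow> complex" where
  "Af q z L = (if L = [] then 1 else uL z L * (\<Sum>i<length L. Af q z (take i L) / qfact q (length L - i)))"
  by pat_completeness auto
termination by (relation "measure (\<lambda>(q,z,L). length L)") auto

declare Af.simps[simp del]


lemma norm_prod_lt1:
  fixes z :: "nat \<Rightarrow> complex"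
  assumes "finite S" "S \<noteq> {}" "\<forall>a\<in>S. norm (z a) < 1"
  shows "norm (\<Prod>a\<in>S. z a) < 1"
  using assms
proof (induction S rule: finite_ne_induct)
  case (singleton x) then show ?case by simp
next
  case (insert a S)
  have "norm (\<Prod>a\<in>insert a S. z a) = norm (z a) * norm (\<Prod>a\<in>S. z a)"
    using insert.hyps by (simp add: norm_mult)
  also have "\<dots> \<le> norm (z a)"
    using insert by (intro mult_left_le) auto
  also have "\<dots> < 1" using insert by auto
  finally show ?case .
qed

lemma sum_pow_minus:
  assumes "finite S"
  shows "(\<Sum>i<card S. \<Sum>T\<in>{T. T \<subseteq> S \<and> card T = i}. g T) = (\<Sum>T\<in>Pow S - {S}. g T)"
proof -
  have e: "Pow S - {S} = (\<Union>i\<in>{..<card S}. {T. T \<subseteq> S \<and> card T = i})"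
  proof
    show "Pow S - {S} \<subseteq> (\<Union>i\<in>{..<card S}. {T. T \<subseteq> S \<and> card T = i})"
    proof
      fix T assume "T \<in> Pow S - {S}"
      then have "T \<subset> S" by auto
      then have "card T < card S" using psubset_card_mono[OF assms] by blast
      then show "T \<in> (\<Union>i\<in>{..<card S}. {T. T \<subseteq> S \<and> card T = i})" using \<open>T \<subset> S\<close> by blast
    qed
    show "(\<Union>i\<in>{..<card S}. {T. T \<subseteq> S \<and> card T = i}) \<subseteq> Pow S - {S}" by auto
  qed
  have fin: "\<forall>i\<in>{..<card S}. finite {T. T \<subseteq> S \<and> card T = i}" using assms by simp
  have dis: "\<forall>i\<in>{..<card S}. \<forall>j\<in>{..<card S}. i \<noteq> j \<longrightarrow> {T. T \<subseteq> S \<and> card T = i} \<inter> {T. T \<subseteq> S \<and> card T = j} = {}"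
    by blast
  show ?thesis unfolding e
    by (subst sum.UNION_disjoint[OF _ fin dis]) simp_all
qed

lemma MC:
  fixes z :: "nat \<Rightarrow> complex"
  assumes "finite S" "inj_on (\<lambda>a. z a / (1 - z a)) S" "\<forall>a\<in>S. norm (z a) < 1" "\<forall>m\<le>card S. qfact q m \<noteq> 0"
  shows "(\<Sum>L\<in>permutations_of_set S. Rl q (\<lambda>a. z a / (1 - z a)) L * Af q z L) = Xp (\<lambda>a. z a / (1 - z a)) S"
  using assms
proof (induction "card S" arbitrary: S rule: less_induct)
  case less
  define x where "x = (\<lambda>a. z a / (1 - z a))"
  show ?case
  proof (cases "S = {}")
    case True then show ?thesis by (simp add: Af.simps Xp_def)
  next
    case False
    define k where "k = card S"
    define ZS where "ZS = (\<Prod>a\<in>S. z a)"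
    have fS: "finite S" using less.prems by simp
    have injS: "inj_on x S" using less.prems x_def by simp
    have uLS: "uL z L = ZS/(1 - ZS)" if "L \<in> permutations_of_set S" for L
      using that unfolding uL_def ZS_def permutations_of_set_def
      by (auto simp: prod.distinct_set_conv_list[symmetric])
    have AfL: "Af q z L = ZS/(1-ZS) * (\<Sum>i<k. Af q z (take i L) / qfact q (k - i))" if L: "L \<in> permutations_of_set S" for L
    proof -
      have "L \<noteq> []" "length L = k" using L False unfolding k_def by (auto simp: permutations_of_set_def distinct_card[symmetric])
      then show ?thesis by (subst Af.simps) (simp add: uLS[OF L])
    qed
    have inner: "(\<Sum>L\<in>permutations_of_set S. Rl q x L * Af q z (take i L))
       = (\<Sum>T\<in>{T. T \<subseteq> S \<and> card T = i}. Xp x T * Th q x S T) * qfact q (k - i)" if i: "i < k" for i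
    proof -
      have "(\<Sum>L\<in>permutations_of_set S. Rl q x L * Af q z (take i L))
        = (\<Sum>T\<in>{T. T \<subseteq> S \<and> card T = i}. \<Sum>L1\<in>permutations_of_set T. \<Sum>L2\<in>permutations_of_set (S - T).
             Rl q x (L1 @ L2) * Af q z (take i (L1 @ L2)))"
        by (rule pos_split) (use fS i k_def in auto)
      also have "\<dots> = (\<Sum>T\<in>{T. T \<subseteq> S \<and> card T = i}. Th q x S T * (\<Sum>L1\<in>permutations_of_set T. Rl q x L1 * Af q z L1) * (\<Sum>L2\<in>permutations_of_set (S - T). Rl q x L2))"
      proof (rule sum.cong[OF refl])
        fix T assume T: "T \<in> {T. T \<subseteq> S \<and> card T = i}"
        have "(\<Sum>L1\<in>permutations_of_set T. \<Sum>L2\<in>permutations_of_set (S - T). Rl q x (L1 @ L2) * Af q z (take i (L1 @ L2)))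
          = (\<Sum>L1\<in>permutations_of_set T. \<Sum>L2\<in>permutations_of_set (S - T). Th q x S T * (Rl q x L1 * Af q z L1) * Rl q x L2)"
        proof (intro sum.cong refl)
          fix L1 L2 assume L1: "L1 \<in> permutations_of_set T" and L2: "L2 \<in> permutations_of_set (S - T)"
          have "length L1 = i" using L1 T by (auto simp: permutations_of_set_def distinct_card[symmetric])
          then show "Rl q x (L1 @ L2) * Af q z (take i (L1 @ L2)) = Th q x S T * (Rl q x L1 * Af q z L1) * Rl q x L2"
            using Rl_append_pos[OF L1 L2] by (simp add: mult_ac)
        qed
        also have "\<dots> = Th q x S T * (\<Sum>L1\<in>permutations_of_set T. Rl q x L1 * Af q z L1) * (\<Sum>L2\<in>permutations_of_set (S - T). Rl q x L2)"
          by (simp add: sum_distrib_left sum_distrib_right mult_ac)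
        finally show "(\<Sum>L1\<in>permutations_of_set T. \<Sum>L2\<in>permutations_of_set (S - T). Rl q x (L1 @ L2) * Af q z (take i (L1 @ L2)))
          = Th q x S T * (\<Sum>L1\<in>permutations_of_set T. Rl q x L1 * Af q z L1) * (\<Sum>L2\<in>permutations_of_set (S - T). Rl q x L2)" .
      qed
      also have "\<dots> = (\<Sum>T\<in>{T. T \<subseteq> S \<and> card T = i}. Xp x T * Th q x S T * qfact q (k - i))"
      proof (rule sum.cong[OF refl])
        fix T assume T: "T \<in> {T. T \<subseteq> S \<and> card T = i}"
        have TS: "T \<subseteq> S" "card T = i" using T by auto
        have fT: "finite T" using TS fS finite_subset by auto
        have lt: "card T < card S" using TS i k_def by simp
        have p3: "\<forall>a\<in>T. norm (z a) < 1" using less.prems(3) TS by auto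
        have p4: "\<forall>m\<le>card T. qfact q m \<noteq> 0" using less.prems(4) lt by auto
        have IH: "(\<Sum>L1\<in>permutations_of_set T. Rl q x L1 * Af q z L1) = Xp x T"
          using less.hyps[OF lt fT inj_on_subset[OF less.prems(2) TS(1)] p3 p4] unfolding x_def .
        have cST: "card (S - T) = k - i" using card_Diff_subset[OF finite_subset[OF TS(1) fS] TS(1)] TS k_def by simp
        have Q: "(\<Sum>L2\<in>permutations_of_set (S - T). Rl q x L2) = qfact q (k - i)"
          using Qsym[of "S - T" x q] fS inj_on_subset[OF injS] cST by auto
        show "Th q x S T * (\<Sum>L1\<in>permutations_of_set T. Rl q x L1 * Af q z L1) * (\<Sum>L2\<in>permutations_of_set (S - T). Rl q x L2)
            = Xp x T * Th q x S T * qfact q (k - i)" by (simp add: IH Q)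
      qed
      finally show ?thesis by (simp only: sum_distrib_right)
    qed
    have "(\<Sum>L\<in>permutations_of_set S. Rl q x L * Af q z L)
        = (\<Sum>L\<in>permutations_of_set S. ZS/(1-ZS) * (\<Sum>i<k. Rl q x L * Af q z (take i L) / qfact q (k - i)))"
    proof (rule sum.cong[OF refl])
      fix L assume L: "L \<in> permutations_of_set S"
      have "Rl q x L * Af q z L = ZS/(1-ZS) * (Rl q x L * (\<Sum>i<k. Af q z (take i L) / qfact q (k - i)))"
        by (simp add: AfL[OF L])
      also have "Rl q x L * (\<Sum>i<k. Af q z (take i L) / qfact q (k - i)) = (\<Sum>i<k. Rl q x L * Af q z (take i L) / qfact q (k - i))"
        by (simp add: sum_distrib_left times_divide_eq_right)
      finally show "Rl q x L * Af q z L = ZS/(1-ZS) * (\<Sum>i<k. Rl q x L * Af q z (take i L) / qfact q (k - i))" .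
    qed
    also have "\<dots> = ZS/(1-ZS) * (\<Sum>L\<in>permutations_of_set S. \<Sum>i<k. Rl q x L * Af q z (take i L) / qfact q (k - i))"
      by (rule sum_distrib_left[symmetric])
    also have "(\<Sum>L\<in>permutations_of_set S. \<Sum>i<k. Rl q x L * Af q z (take i L) / qfact q (k - i))
        = (\<Sum>i<k. \<Sum>L\<in>permutations_of_set S. Rl q x L * Af q z (take i L) / qfact q (k - i))"
      by (rule sum.swap)
    also have "\<dots> = (\<Sum>i<k. (\<Sum>L\<in>permutations_of_set S. Rl q x L * Af q z (take i L)) / qfact q (k - i))"
      by (simp only: sum_divide_distrib)
    also have "\<dots> = (\<Sum>i<k. \<Sum>T\<in>{T. T \<subseteq> S \<and> card T = i}. Xp x T * Th q x S T)"
    proof -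
      have "(\<Sum>L\<in>permutations_of_set S. Rl q x L * Af q z (take i L)) / qfact q (k - i)
          = (\<Sum>T\<in>{T. T \<subseteq> S \<and> card T = i}. Xp x T * Th q x S T)" if "i \<in> {..<k}" for i
      proof -
        have "qfact q (k - i) \<noteq> 0" using less.prems(4) k_def by simp
        then show ?thesis using inner[of i] that by simp
      qed
      then show ?thesis by simp
    qed
    also have "\<dots> = ((\<Prod>a\<in>S. 1 + x a) - Xp x S)"
    proof -
      have "(\<Sum>i<k. \<Sum>T\<in>{T. T \<subseteq> S \<and> card T = i}. Xp x T * Th q x S T) = (\<Sum>T\<in>Pow S - {S}. Xp x T * Th q x S T)"
        unfolding k_def by (rule sum_pow_minus[OF fS])
      also have "\<dots> = (\<Sum>T\<in>Pow S. Xp x T * Th q x S T) - Xp x S * Th q x S S"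
        using fS by (simp add: sum_diff1)
      also have "\<dots> = (\<Prod>a\<in>S. 1 + x a) - Xp x S"
        using Rstar[OF fS injS] by (simp add: Th_def)
      finally show ?thesis by simp
    qed
    also have "ZS/(1-ZS) * ((\<Prod>a\<in>S. 1 + x a) - Xp x S) = Xp x S"
    proof -
      have z1: "z a \<noteq> 1" if "a \<in> S" for a using less.prems(3) that by auto
      have P1: "(\<Prod>a\<in>S. 1 - z a) \<noteq> 0" using z1 fS by (simp add: prod_zero_iff)
      have "norm ZS < 1" using norm_prod_lt1[OF fS False less.prems(3)] unfolding ZS_def .
      then have ZS1: "1 - ZS \<noteq> 0" by auto
      have e1: "(\<Prod>a\<in>S. 1 + x a) = 1 / (\<Prod>a\<in>S. 1 - z a)"
      proof -
        have "(\<Prod>a\<in>S. 1 + x a) = (\<Prod>a\<in>S. 1 / (1 - z a))"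
          by (rule prod.cong[OF refl]) (use z1 in \<open>simp add: x_def field_simps\<close>)
        then show ?thesis by (simp add: prod_dividef)
      qed
      have e2: "Xp x S = ZS / (\<Prod>a\<in>S. 1 - z a)"
        unfolding Xp_def x_def ZS_def by (simp add: prod_dividef)
      show ?thesis unfolding e1 e2 using P1 ZS1 by (simp add: field_simps)
    qed
    finally show ?thesis unfolding x_def .
  qed
qed


lemma len_le_sum: "\<forall>m\<in>set ms. 0 < (m::nat) \<Longrightarrow> length ms \<le> sum_list ms"
  by (induction ms) auto

lemma comp_fin: "finite (compositions k)"
proof -
  have "compositions k \<subseteq> {ms. set ms \<subseteq> {..k} \<and> length ms \<le> k}"
    unfolding compositions_def using len_le_sum member_le_sum_list by fastforce
  moreover have "finite {ms. set ms \<subseteq> {..k} \<and> length ms \<le> k}"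
    by (rule finite_lists_length_le) simp
  ultimately show ?thesis by (rule finite_subset)
qed

lemma comp0: "compositions 0 = {[]}"
proof -
  have "ms = []" if "ms \<in> compositions 0" for ms using that by (cases ms) (auto simp: compositions_def)
  then show ?thesis by (auto simp: compositions_def)
qed

lemma comp_dec:
  assumes "1 \<le> k"
  shows "compositions k = (\<lambda>(m,ms). m # ms) ` Sigma {1..k} (\<lambda>m. compositions (k - m))"
proof
  show "compositions k \<subseteq> (\<lambda>(m,ms). m # ms) ` Sigma {1..k} (\<lambda>m. compositions (k - m))"
  proof
    fix ms assume ms: "ms \<in> compositions k"
    then have "ms \<noteq> []" using assms by (auto simp: compositions_def)
    then obtain m ms' where e: "ms = m # ms'" by (cases ms) auto
    then have "m \<in> {1..k}" "ms' \<in> compositions (k - m)" using ms by (auto simp: compositions_def)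
    then show "ms \<in> (\<lambda>(m,ms). m # ms) ` Sigma {1..k} (\<lambda>m. compositions (k - m))" using e by force
  qed
  show "(\<lambda>(m,ms). m # ms) ` Sigma {1..k} (\<lambda>m. compositions (k - m)) \<subseteq> compositions k"
    by (auto simp: compositions_def)
qed

lemma comp_sum:
  assumes "1 \<le> k"
  shows "(\<Sum>ms\<in>compositions k. g ms) = (\<Sum>m\<in>{1..k}. \<Sum>ms\<in>compositions (k - m). g (m # ms))"
proof -
  have inj: "inj_on (\<lambda>(m,ms). m # ms) (Sigma {1..k} (\<lambda>m. compositions (k - m)))"
    by (auto simp: inj_on_def)
  show ?thesis unfolding comp_dec[OF assms]
    by (subst sum.reindex[OF inj]) (simp add: sum.Sigma comp_fin split_def)
qed

definition Cl :: "complex \<Rightarrow> (nat \<Rightarrow> complex) \<Rightarrow> nat list \<Rightarrow> complex" where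
  "Cl q z L = (\<Sum>ms\<in>compositions (length L). 1 / (\<Prod>m\<leftarrow>ms. qfact q m) *
      (\<Prod>j<length ms - 1. uL z (take (length L - sum_list (take (Suc j) ms)) L)))"

definition Dl :: "complex \<Rightarrow> (nat \<Rightarrow> complex) \<Rightarrow> nat list \<Rightarrow> complex" where
  "Dl q z L = (\<Sum>i<length L. Af q z (take i L) / qfact q (length L - i))"

lemma Af_Dl: "L \<noteq> [] \<Longrightarrow> Af q z L = uL z L * Dl q z L"
  unfolding Dl_def by (subst Af.simps) simp

lemma Cl_step:
  assumes "m < length L" "ms \<in> compositions (length L - m)"
  shows "1 / (\<Prod>m'\<leftarrow>m # ms. qfact q m') * (\<Prod>j<length (m # ms) - 1. uL z (take (length L - sum_list (take (Suc j) (m # ms))) L))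
       = 1 / qfact q m * uL z (take (length L - m) L) *
         (1 / (\<Prod>m'\<leftarrow>ms. qfact q m') * (\<Prod>j<length ms - 1. uL z (take (length (take (length L - m) L) - sum_list (take (Suc j) ms)) (take (length L - m) L))))"
proof -
  have "ms \<noteq> []" using assms by (auto simp: compositions_def)
  then obtain n where n: "length ms = Suc n" by (cases ms) auto
  have lt: "length (take (length L - m) L) = length L - m" by simp
  have "(\<Prod>j<length (m # ms) - 1. uL z (take (length L - sum_list (take (Suc j) (m # ms))) L))
     = uL z (take (length L - m) L) * (\<Prod>j<n. uL z (take (length L - sum_list (take (Suc (Suc j)) (m # ms))) L))"
  proof -
    have ln: "length (m#ms) - 1 = Suc n" using n by simp
    show ?thesis
      apply (simp only: ln)
      apply (subst prod.lessThan_Suc_shift)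
      apply (simp only: take_Suc_Cons take_0 sum_list.Cons sum_list.Nil add_0_right)
      done
  qed
  also have "(\<Prod>j<n. uL z (take (length L - sum_list (take (Suc (Suc j)) (m # ms))) L))
      = (\<Prod>j<n. uL z (take (length (take (length L - m) L) - sum_list (take (Suc j) ms)) (take (length L - m) L)))"
    by (rule prod.cong[OF refl]) (simp add: lt take_take min_absorb1 diff_diff_left)
  finally show ?thesis using n by (simp add: mult_ac)
qed

lemma Cl_Dl: "L \<noteq> [] \<Longrightarrow> Cl q z L = Dl q z L"
proof (induction "length L" arbitrary: L rule: less_induct)
  case less
  define k where "k = length L"
  have k1: "1 \<le> k" using less.prems k_def by (cases L) auto
  have "Cl q z L = (\<Sum>m\<in>{1..k}. \<Sum>ms\<in>compositions (k - m). 1 / (\<Prod>m'\<leftarrow>m # ms. qfact q m') *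
      (\<Prod>j<length (m # ms) - 1. uL z (take (length L - sum_list (take (Suc j) (m # ms))) L)))"
    unfolding Cl_def k_def[symmetric] by (rule comp_sum[OF k1])
  also have "\<dots> = 1 / qfact q k + (\<Sum>m\<in>{1..<k}. \<Sum>ms\<in>compositions (k - m). 1 / (\<Prod>m'\<leftarrow>m # ms. qfact q m') *
      (\<Prod>j<length (m # ms) - 1. uL z (take (length L - sum_list (take (Suc j) (m # ms))) L)))"
  proof -
    have e: "{1..k} = insert k {1..<k}" using k1 by auto
    show ?thesis unfolding e by (simp add: comp0)
  qed
  also have "(\<Sum>m\<in>{1..<k}. \<Sum>ms\<in>compositions (k - m). 1 / (\<Prod>m'\<leftarrow>m # ms. qfact q m') *
      (\<Prod>j<length (m # ms) - 1. uL z (take (length L - sum_list (take (Suc j) (m # ms))) L)))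
      = (\<Sum>m\<in>{1..<k}. Af q z (take (k - m) L) / qfact q m)"
  proof (rule sum.cong[OF refl])
    fix m assume m: "m \<in> {1..<k}"
    have mL: "m < length L" using m k_def by auto
    define M where "M = take (k - m) L"
    have M: "M \<noteq> []" "length M < length L" "length M = k - m" using m k_def by (auto simp: M_def)
    have "(\<Sum>ms\<in>compositions (k - m). 1 / (\<Prod>m'\<leftarrow>m # ms. qfact q m') *
      (\<Prod>j<length (m # ms) - 1. uL z (take (length L - sum_list (take (Suc j) (m # ms))) L)))
      = (\<Sum>ms\<in>compositions (k - m). 1 / qfact q m * uL z M *
         (1 / (\<Prod>m'\<leftarrow>ms. qfact q m') * (\<Prod>j<length ms - 1. uL z (take (length M - sum_list (take (Suc j) ms)) M))))"
      by (rule sum.cong[OF refl]) (use Cl_step[OF mL] k_def M_def in simp)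
    also have "\<dots> = 1 / qfact q m * uL z M * Cl q z M"
      unfolding Cl_def M(3) by (simp add: sum_distrib_left)
    also have "\<dots> = Af q z M / qfact q m"
      using less.hyps[OF M(2) M(1)] Af_Dl[OF M(1)] by simp
    finally show "(\<Sum>ms\<in>compositions (k - m). 1 / (\<Prod>m'\<leftarrow>m # ms. qfact q m') *
      (\<Prod>j<length (m # ms) - 1. uL z (take (length L - sum_list (take (Suc j) (m # ms))) L)))
      = Af q z (take (k - m) L) / qfact q m" unfolding M_def .
  qed
  also have "(\<Sum>m\<in>{1..<k}. Af q z (take (k - m) L) / qfact q m) = (\<Sum>i\<in>{1..<k}. Af q z (take i L) / qfact q (k - i))"
    by (rule sum.reindex_bij_witness[where i = "\<lambda>i. k - i" and j = "\<lambda>i. k - i"]) auto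
  also have "1 / qfact q k + (\<Sum>i\<in>{1..<k}. Af q z (take i L) / qfact q (k - i)) = Dl q z L"
  proof -
    have e: "{..<k} = insert 0 {1..<k}" using k1 by auto
    show ?thesis unfolding Dl_def k_def[symmetric] e by (simp add: Af.simps)
  qed
  finally show ?case .
qed

lemma take_map_upt: "l \<le> N \<Longrightarrow> take l (map \<sigma> [1..<Suc N]) = map \<sigma> [1..<Suc l]"
  by (simp add: take_map take_upt del: upt_Suc)

lemma pl: "l \<le> N \<Longrightarrow> prod_list (map z (take l (map \<sigma> [1..<Suc N]))) = (\<Prod>j=1..l. z (\<sigma> j))"
proof -
  assume l: "l \<le> N"
  have "prod_list (map z (take l (map \<sigma> [1..<Suc N]))) = prod_list (map (\<lambda>j. z (\<sigma> j)) [1..<Suc l])"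
    by (simp only: take_map_upt[OF l] map_map comp_def)
  also have "\<dots> = (\<Prod>j\<in>set [1..<Suc l]. z (\<sigma> j))"
    by (rule prod.distinct_set_conv_list[symmetric]) simp
  also have "set [1..<Suc l] = {1..l}" by auto
  finally show ?thesis .
qed

lemma Phi_list:
  assumes "1 \<le> N"
  shows "Phi N q (\<lambda>i. z (\<sigma> i)) = 1 / (1 - prod_list (map z (map \<sigma> [1..<Suc N]))) * Cl q z (map \<sigma> [1..<Suc N])"
proof -
  define L where "L = map \<sigma> [1..<Suc N]"
  have len: "length L = N" by (simp add: L_def)
  have tv: "tvar N (\<lambda>i. z (\<sigma> i)) s = uL z (take (N - s) L)" for s
    unfolding tvar_def uL_def L_def using pl[of "N - s" N z \<sigma>] by simp
  have top: "(\<Prod>j=1..N. z (\<sigma> j)) = prod_list (map z L)"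
    using pl[of N N z \<sigma>] by (simp add: L_def)
  show ?thesis
    unfolding Phi_def Cl_def L_def[symmetric] len top tv ..
qed


definition PP :: "nat \<Rightarrow> (nat \<times> nat) set" where
  "PP N = Sigma {1..N} (\<lambda>i. {i<..N})"

lemma finite_PP: "finite (PP N)" unfolding PP_def by simp

lemma prodPP: "(\<Prod>i\<in>{1..N}. \<Prod>j\<in>{i<..N}. f i j) = (\<Prod>p\<in>PP N. f (fst p) (snd p))"
  unfolding PP_def by (simp add: prod.Sigma split_def)

lemma minmax_eq: fixes a b c d :: nat
  assumes "min a b = min c d" "max a b = max c d"
  shows "(a = c \<and> b = d) \<or> (a = d \<and> b = c)"
  using assms by (cases "a \<le> b"; cases "c \<le> d") (auto simp: min_def max_def)

lemma bij_phi:
  assumes "\<sigma> permutes {1..N}"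
  shows "bij_betw (\<lambda>p. (min (\<sigma> (fst p)) (\<sigma> (snd p)), max (\<sigma> (fst p)) (\<sigma> (snd p)))) (PP N) (PP N)"
proof -
  define \<phi> where "\<phi> = (\<lambda>p. (min (\<sigma> (fst p)) (\<sigma> (snd p)), max (\<sigma> (fst p)) (\<sigma> (snd p))))"
  have inj\<sigma>: "inj \<sigma>" by (rule permutes_inj[OF assms])
  have img: "\<sigma> i \<in> {1..N}" if "i \<in> {1..N}" for i using permutes_in_image[OF assms] that by simp
  have into: "\<phi> ` PP N \<subseteq> PP N"
  proof
    fix p assume "p \<in> \<phi> ` PP N"
    then obtain i j where p: "p = \<phi> (i,j)" "i \<in> {1..N}" "j \<in> {i<..N}" unfolding PP_def by auto
    have "i \<noteq> j" using p(3) by simp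
    then have ne: "\<sigma> i \<noteq> \<sigma> j" using inj\<sigma> by (simp add: inj_eq)
    have "j \<in> {1..N}" using p by simp
    then have i1: "\<sigma> i \<in> {1..N}" "\<sigma> j \<in> {1..N}" using p(2) img by auto
    show "p \<in> PP N" unfolding p \<phi>_def PP_def
    proof (cases "\<sigma> i < \<sigma> j")
      case True then show "(min (\<sigma> (fst (i, j))) (\<sigma> (snd (i, j))), max (\<sigma> (fst (i, j))) (\<sigma> (snd (i, j)))) \<in> Sigma {1..N} (\<lambda>i. {i<..N})"
        using i1 by simp
    next
      case False then have "\<sigma> j < \<sigma> i" using ne by simp
      then show "(min (\<sigma> (fst (i, j))) (\<sigma> (snd (i, j))), max (\<sigma> (fst (i, j))) (\<sigma> (snd (i, j)))) \<in> Sigma {1..N} (\<lambda>i. {i<..N})"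
        using i1 by simp
    qed
  qed
  have inj: "inj_on \<phi> (PP N)"
  proof
    fix p p' assume p: "p \<in> PP N" and p': "p' \<in> PP N" and e: "\<phi> p = \<phi> p'"
    obtain i j where ij: "p = (i,j)" "i < j" using p unfolding PP_def by auto
    obtain i' j' where ij': "p' = (i',j')" "i' < j'" using p' unfolding PP_def by auto
    have "min (\<sigma> i) (\<sigma> j) = min (\<sigma> i') (\<sigma> j')" "max (\<sigma> i) (\<sigma> j) = max (\<sigma> i') (\<sigma> j')"
      using e unfolding ij ij' \<phi>_def by simp_all
    then have "(\<sigma> i = \<sigma> i' \<and> \<sigma> j = \<sigma> j') \<or> (\<sigma> i = \<sigma> j' \<and> \<sigma> j = \<sigma> i')" by (rule minmax_eq)
    then have "(i = i' \<and> j = j') \<or> (i = j' \<and> j = i')" using inj\<sigma> by (simp add: inj_eq)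
    then show "p = p'" using ij ij' by auto
  qed
  have "card (\<phi> ` PP N) = card (PP N)" using inj by (rule card_image)
  then have e: "\<phi> ` PP N = PP N" using card_subset_eq[OF finite_PP into] by simp
  have "bij_betw \<phi> (PP N) (PP N)" unfolding bij_betw_def using inj e by blast
  then show ?thesis unfolding \<phi>_def .
qed

definition epsP :: "nat \<Rightarrow> (nat \<Rightarrow> nat) \<Rightarrow> complex" where
  "epsP N \<sigma> = (\<Prod>p\<in>PP N. if \<sigma> (fst p) < \<sigma> (snd p) then 1 else -1)"

lemma GL:
  fixes y :: "nat \<Rightarrow> complex"
  assumes "\<sigma> permutes {1..N}"
  shows "(\<Prod>p\<in>PP N. y (\<sigma> (fst p)) - y (\<sigma> (snd p))) = epsP N \<sigma> * (\<Prod>p\<in>PP N. y (fst p) - y (snd p))"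
proof -
  define \<phi> where "\<phi> = (\<lambda>p. (min (\<sigma> (fst p)) (\<sigma> (snd p)), max (\<sigma> (fst p)) (\<sigma> (snd p))))"
  have b: "bij_betw \<phi> (PP N) (PP N)" using bij_phi[OF assms] unfolding \<phi>_def .
  have "(\<Prod>p\<in>PP N. y (\<sigma> (fst p)) - y (\<sigma> (snd p)))
      = (\<Prod>p\<in>PP N. (if \<sigma> (fst p) < \<sigma> (snd p) then 1 else -1) * (y (fst (\<phi> p)) - y (snd (\<phi> p))))"
    by (rule prod.cong[OF refl]) (auto simp: \<phi>_def min_def max_def)
  also have "\<dots> = epsP N \<sigma> * (\<Prod>p\<in>PP N. y (fst (\<phi> p)) - y (snd (\<phi> p)))"
    unfolding epsP_def by (simp add: prod.distrib)
  also have "(\<Prod>p\<in>PP N. y (fst (\<phi> p)) - y (snd (\<phi> p))) = (\<Prod>p\<in>PP N. y (fst p) - y (snd p))"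
    using prod.reindex_bij_betw[OF b, of "\<lambda>p. y (fst p) - y (snd p)"] by simp
  finally show ?thesis .
qed

lemma eps_transpose:
  assumes "a \<in> {1..N}" "b \<in> {1..N}" "a < b"
  shows "epsP N (transpose a b) = -1"
proof -
  define I where "I = {p \<in> PP N. \<not> transpose a b (fst p) < transpose a b (snd p)}"
  have I: "I = insert (a,b) ((\<lambda>c. (a,c)) ` {a<..<b} \<union> (\<lambda>c. (c,b)) ` {a<..<b})"
  proof
    show "I \<subseteq> insert (a,b) ((\<lambda>c. (a,c)) ` {a<..<b} \<union> (\<lambda>c. (c,b)) ` {a<..<b})"
    proof
      fix p assume p: "p \<in> I"
      obtain i j where ij: "p = (i,j)" "i \<in> {1..N}" "j \<in> {i<..N}" using p unfolding I_def PP_def by auto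
      have n: "\<not> transpose a b i < transpose a b j" using p ij unfolding I_def by auto
      show "p \<in> insert (a,b) ((\<lambda>c. (a,c)) ` {a<..<b} \<union> (\<lambda>c. (c,b)) ` {a<..<b})"
        using n ij assms by (auto simp: transpose_def split: if_splits)
    qed
    show "insert (a,b) ((\<lambda>c. (a,c)) ` {a<..<b} \<union> (\<lambda>c. (c,b)) ` {a<..<b}) \<subseteq> I"
      using assms unfolding I_def PP_def by (auto simp: transpose_def)
  qed
  have c1: "card ((\<lambda>c. (a,c)) ` {a<..<b}) = b - a - 1" by (subst card_image) (auto simp: inj_on_def)
  have c2: "card ((\<lambda>c. (c,b)) ` {a<..<b}) = b - a - 1" by (subst card_image) (auto simp: inj_on_def)
  have d: "(\<lambda>c. (a,c)) ` {a<..<b} \<inter> (\<lambda>c. (c,b)) ` {a<..<b} = {}" by auto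
  have nin: "(a,b) \<notin> (\<lambda>c. (a,c)) ` {a<..<b} \<union> (\<lambda>c. (c,b)) ` {a<..<b}" by auto
  have cu: "card ((\<lambda>c. (a,c)) ` {a<..<b} \<union> (\<lambda>c. (c,b)) ` {a<..<b}) = 2 * (b - a - 1)"
    using c1 c2 d by (subst card_Un_disjoint) auto
  have cI: "card I = Suc (2 * (b - a - 1))"
    unfolding I using cu nin by (subst card_insert_disjoint) auto
  have "epsP N (transpose a b) = (\<Prod>p\<in>I. -1)"
    unfolding epsP_def I_def using finite_PP
    by (simp add: prod.If_cases Int_def)
  also have "\<dots> = -1" using cI by simp
  finally show ?thesis .
qed

lemma Vperm:
  assumes "\<sigma> permutes {1..N}"
  shows "\<forall>y::nat \<Rightarrow> complex. (\<Prod>p\<in>PP N. y (\<sigma> (fst p)) - y (\<sigma> (snd p))) = of_int (sign \<sigma>) * (\<Prod>p\<in>PP N. y (fst p) - y (snd p))"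
  using assms finite_atLeastAtMost
proof (induction rule: permutes_induct)
  case id
  then show ?case by simp
next
  case (swap a b p)
  show ?case
  proof
    fix y :: "nat \<Rightarrow> complex"
    have pp: "permutation p" using swap.hyps(4) permutation_permutes by blast
    have "(\<Prod>q\<in>PP N. y ((transpose a b \<circ> p) (fst q)) - y ((transpose a b \<circ> p) (snd q)))
       = (\<Prod>q\<in>PP N. (y \<circ> transpose a b) (p (fst q)) - (y \<circ> transpose a b) (p (snd q)))" by simp
    also have "\<dots> = of_int (sign p) * (\<Prod>q\<in>PP N. (y \<circ> transpose a b) (fst q) - (y \<circ> transpose a b) (snd q))"
      using swap.IH by blast
    also have "(\<Prod>q\<in>PP N. (y \<circ> transpose a b) (fst q) - (y \<circ> transpose a b) (snd q)) = epsP N (transpose a b) * (\<Prod>q\<in>PP N. y (fst q) - y (snd q))"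
      using GL[of "transpose a b" N y] swap.hyps(1,2) by (simp add: permutes_swap_id)
    also have "epsP N (transpose a b) = -1"
    proof (cases "a < b")
      case True then show ?thesis using eps_transpose swap.hyps by blast
    next
      case False then have "b < a" using swap.hyps(3) by simp
      then show ?thesis using eps_transpose[of b N a] swap.hyps by (simp add: transpose_commute)
    qed
    also have "sign (transpose a b \<circ> p) = - sign p"
      using sign_compose[OF permutation_swap_id pp] swap.hyps(3) by (simp add: sign_swap_id)
    ultimately show "(\<Prod>q\<in>PP N. y ((transpose a b \<circ> p) (fst q)) - y ((transpose a b \<circ> p) (snd q)))
        = of_int (sign (transpose a b \<circ> p)) * (\<Prod>q\<in>PP N. y (fst q) - y (snd q))" by simp
  qed
qed


lemma fz_id: fixes a b q :: complex assumes "a \<noteq> 1" "b \<noteq> 1"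
  shows "a - q * b - (1 - q) * a * b = (a/(1-a) - q*(b/(1-b))) * ((1-a) * (1-b))"
proof -
  have h: "1 - a \<noteq> 0" "1 - b \<noteq> 0" using assms by auto
  show ?thesis using assms apply (simp add: divide_simps h)
    apply (simp add: algebra_simps)
    done
qed

lemma zd_id: fixes a b :: complex assumes "a \<noteq> 1" "b \<noteq> 1"
  shows "a - b = (a/(1-a) - b/(1-b)) * ((1-a) * (1-b))"
proof -
  have h: "1 - a \<noteq> 0" "1 - b \<noteq> 0" using assms by auto
  show ?thesis using assms apply (simp add: divide_simps h)
    apply (simp add: algebra_simps)
    done
qed

lemma GLsym:
  assumes "\<sigma> permutes {1..N}" "\<And>a b. g a b = g b a"
  shows "(\<Prod>p\<in>PP N. g (\<sigma> (fst p)) (\<sigma> (snd p))) = (\<Prod>p\<in>PP N. g (fst p) (snd p))"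
proof -
  define \<phi> where "\<phi> = (\<lambda>p. (min (\<sigma> (fst p)) (\<sigma> (snd p)), max (\<sigma> (fst p)) (\<sigma> (snd p))))"
  have b: "bij_betw \<phi> (PP N) (PP N)" using bij_phi[OF assms(1)] unfolding \<phi>_def .
  have "(\<Prod>p\<in>PP N. g (\<sigma> (fst p)) (\<sigma> (snd p))) = (\<Prod>p\<in>PP N. g (fst (\<phi> p)) (snd (\<phi> p)))"
    by (rule prod.cong[OF refl]) (auto simp: \<phi>_def min_def max_def assms(2))
  also have "\<dots> = (\<Prod>p\<in>PP N. g (fst p) (snd p))"
    using prod.reindex_bij_betw[OF b, of "\<lambda>p. g (fst p) (snd p)"] by simp
  finally show ?thesis .
qed

lemma Rl_upt: "Rl q x (map g [m..<n]) = (\<Prod>i\<in>{m..<n}. \<Prod>j\<in>{i<..<n}. rr q x (g i) (g j))"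
proof (induction "n - m" arbitrary: m)
  case 0
  then show ?case by simp
next
  case (Suc k)
  then have mn: "m < n" by simp
  have e: "[m..<n] = m # [Suc m..<n]" using mn upt_rec by simp
  have s: "{m..<n} = insert m {Suc m..<n}" using mn by auto
  have t: "{m<..<n} = {Suc m..<n}" by auto
  have "(\<Prod>b\<leftarrow>map g [Suc m..<n]. rr q x (g m) b) = (\<Prod>j\<leftarrow>[Suc m..<n]. rr q x (g m) (g j))"
    by (simp add: comp_def)
  also have "\<dots> = (\<Prod>j\<in>set [Suc m..<n]. rr q x (g m) (g j))"
    by (rule prod.distinct_set_conv_list[symmetric]) simp
  also have "set [Suc m..<n] = {m<..<n}" by auto
  finally have pl: "(\<Prod>b\<leftarrow>map g [Suc m..<n]. rr q x (g m) b) = (\<Prod>j\<in>{m<..<n}. rr q x (g m) (g j))" .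
  show ?case unfolding e s using Suc.hyps(1)[of "Suc m"] Suc.hyps(2) pl by simp
qed

lemma perm_list_bij:
  "bij_betw (\<lambda>\<sigma>. map \<sigma> [1..<Suc N]) {\<sigma>. \<sigma> permutes {1..N}} (permutations_of_set {1..N})"
proof -
  have setu: "set [1..<Suc N] = {1..N}" by auto
  have inj: "inj_on (\<lambda>\<sigma>. map \<sigma> [1..<Suc N]) {\<sigma>. \<sigma> permutes {1..N}}"
  proof
    fix \<sigma> \<tau> assume s: "\<sigma> \<in> {\<sigma>. \<sigma> permutes {1..N}}" and t: "\<tau> \<in> {\<sigma>. \<sigma> permutes {1..N}}"
      and e: "map \<sigma> [1..<Suc N] = map \<tau> [1..<Suc N]"
    show "\<sigma> = \<tau>"
    proof
      fix i show "\<sigma> i = \<tau> i"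
      proof (cases "i \<in> {1..N}")
        case True then show ?thesis using e setu by (metis map_eq_conv)
      next
        case False then show ?thesis using s t permutes_not_in by (metis mem_Collect_eq)
      qed
    qed
  qed
  have img: "(\<lambda>\<sigma>. map \<sigma> [1..<Suc N]) ` {\<sigma>. \<sigma> permutes {1..N}} = permutations_of_set {1..N}"
  proof
    show "(\<lambda>\<sigma>. map \<sigma> [1..<Suc N]) ` {\<sigma>. \<sigma> permutes {1..N}} \<subseteq> permutations_of_set {1..N}"
    proof
      fix L assume "L \<in> (\<lambda>\<sigma>. map \<sigma> [1..<Suc N]) ` {\<sigma>. \<sigma> permutes {1..N}}"
      then obtain \<sigma> where s: "\<sigma> permutes {1..N}" and L: "L = map \<sigma> [1..<Suc N]" by auto
      have "distinct L" unfolding L using s permutes_inj by (metis distinct_map distinct_upt inj_on_subset subset_UNIV)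
      moreover have "set L = {1..N}" unfolding L using s setu permutes_image by (metis list.set_map)
      ultimately show "L \<in> permutations_of_set {1..N}" by (simp add: permutations_of_set_def)
    qed
    show "permutations_of_set {1..N} \<subseteq> (\<lambda>\<sigma>. map \<sigma> [1..<Suc N]) ` {\<sigma>. \<sigma> permutes {1..N}}"
    proof
      fix L assume L: "L \<in> permutations_of_set {1..N}"
      then have d: "distinct L" "set L = {1..N}" "length L = N" by (auto simp: permutations_of_set_def distinct_card[symmetric])
      define \<sigma> where "\<sigma> i = (if i \<in> {1..N} then L ! (i - 1) else i)" for i
      have m: "map \<sigma> [1..<Suc N] = L"
        by (rule nth_equalityI) (auto simp: \<sigma>_def d(3) nth_upt simp del: upt_Suc)
      have bij: "bij_betw \<sigma> {1..N} {1..N}"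
      proof (rule bij_betw_imageI)
        show "inj_on \<sigma> {1..N}"
          unfolding inj_on_def \<sigma>_def using d by (auto simp: nth_eq_iff_index_eq)
        show "\<sigma> ` {1..N} = {1..N}"
        proof -
          have "\<sigma> ` {1..N} = set (map \<sigma> [1..<Suc N])" by (simp only: set_map setu)
          then show ?thesis unfolding m d(2) .
        qed
      qed
      have "\<sigma> permutes {1..N}"
        by (rule bij_imp_permutes[OF bij]) (auto simp: \<sigma>_def)
      then show "L \<in> (\<lambda>\<sigma>. map \<sigma> [1..<Suc N]) ` {\<sigma>. \<sigma> permutes {1..N}}" using m by force
    qed
  qed
  show ?thesis using inj img unfolding bij_betw_def by simp
qed


theorem generic:
  fixes N :: nat and q :: complex and z :: "nat \<Rightarrow> complex"
  assumes N1: "N \<ge> 1"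
    and qi: "\<forall>k\<in>{1..N}. qint q k \<noteq> 0"
    and nz: "\<forall>i\<in>{1..N}. norm (z i) < 1"
    and injz: "inj_on z {1..N}"
    and z0: "\<forall>i\<in>{1..N}. z i \<noteq> 0"
  shows "(\<Sum>\<sigma> | \<sigma> permutes {1..N}.
            of_int (sign \<sigma>) *
            (\<Prod>i\<in>{1..N}. \<Prod>j\<in>{i<..N}.
               (z (\<sigma> i) - q * z (\<sigma> j) - (1 - q) * z (\<sigma> i) * z (\<sigma> j))) *
            Fsig N q z \<sigma>)
         = (\<Prod>i\<in>{1..N}. \<Prod>j\<in>{i<..N}. (z i - z j)) / (\<Prod>i=1..N. (1 - z i))"
proof -
  define x where "x = (\<lambda>a. z a / (1 - z a))"
  define V where "V y = (\<Prod>p\<in>PP N. y (fst p) - y (snd p))" for y :: "nat \<Rightarrow> complex"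
  define K where "K = (\<Prod>p\<in>PP N. (1 - z (fst p)) * (1 - z (snd p)))"
  define Z where "Z = (\<Prod>a\<in>{1..N}. z a)"
  define P1 where "P1 = (\<Prod>i=1..N. (1 - z i))"
  have z1: "z a \<noteq> 1" if "a \<in> {1..N}" for a
  proof -
    have "norm (z a) < 1" using nz that by blast
    then show ?thesis by auto
  qed
  have injx: "inj_on x {1..N}"
  proof
    fix a b assume a: "a \<in> {1..N}" and b: "b \<in> {1..N}" and e: "x a = x b"
    have "1 - z a \<noteq> 0" "1 - z b \<noteq> 0" using z1 a b by auto
    then have "z a * (1 - z b) = z b * (1 - z a)" using e unfolding x_def by (simp add: field_simps)
    then have "z a = z b" by (simp add: algebra_simps)
    then show "a = b" using injz a b by (meson inj_onD)
  qed
  have qf: "\<forall>m\<le>card {1..N}. qfact q m \<noteq> 0"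
    using qi by (auto simp: qfact_def)
  have MCi: "(\<Sum>L\<in>permutations_of_set {1..N}. Rl q x L * Af q z L) = Xp x {1..N}"
    using MC[of "{1..N}" z q] injx nz qf unfolding x_def by simp
  have Z0: "Z \<noteq> 0" using z0 unfolding Z_def by simp
  have PPin: "fst p \<in> {1..N}" "snd p \<in> {1..N}" "fst p < snd p" if "p \<in> PP N" for p
    using that unfolding PP_def by auto
  have summand: "of_int (sign \<sigma>) *
            (\<Prod>i\<in>{1..N}. \<Prod>j\<in>{i<..N}.
               (z (\<sigma> i) - q * z (\<sigma> j) - (1 - q) * z (\<sigma> i) * z (\<sigma> j))) *
            Fsig N q z \<sigma> = V x * K / Z * (Rl q x (map \<sigma> [1..<Suc N]) * Af q z (map \<sigma> [1..<Suc N]))"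
    if s: "\<sigma> permutes {1..N}" for \<sigma>
  proof -
    define L where "L = map \<sigma> [1..<Suc N]"
    have sig: "\<sigma> a \<in> {1..N}" if "a \<in> {1..N}" for a using permutes_in_image[OF s] that by simp
    have injs: "inj \<sigma>" by (rule permutes_inj[OF s])
    have sd: "\<sigma> (fst p) \<noteq> \<sigma> (snd p)" if "p \<in> PP N" for p
      using PPin[OF that] injs by (metis less_irrefl inj_eq)
    have i: "(\<Prod>i\<in>{1..N}. \<Prod>j\<in>{i<..N}. (z (\<sigma> i) - q * z (\<sigma> j) - (1 - q) * z (\<sigma> i) * z (\<sigma> j)))
        = (\<Prod>p\<in>PP N. x (\<sigma> (fst p)) - q * x (\<sigma> (snd p))) * K"
    proof -
      have "(\<Prod>i\<in>{1..N}. \<Prod>j\<in>{i<..N}. (z (\<sigma> i) - q * z (\<sigma> j) - (1 - q) * z (\<sigma> i) * z (\<sigma> j)))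
          = (\<Prod>p\<in>PP N. (x (\<sigma> (fst p)) - q * x (\<sigma> (snd p))) * ((1 - z (\<sigma> (fst p))) * (1 - z (\<sigma> (snd p)))))"
        unfolding prodPP
        by (rule prod.cong[OF refl]) (use fz_id z1 sig PPin in \<open>simp add: x_def\<close>)
      also have "\<dots> = (\<Prod>p\<in>PP N. x (\<sigma> (fst p)) - q * x (\<sigma> (snd p))) * (\<Prod>p\<in>PP N. (1 - z (\<sigma> (fst p))) * (1 - z (\<sigma> (snd p))))"
        by (rule prod.distrib)
      also have "(\<Prod>p\<in>PP N. (1 - z (\<sigma> (fst p))) * (1 - z (\<sigma> (snd p)))) = K"
        unfolding K_def using GLsym[OF s, of "\<lambda>a b. (1 - z a) * (1 - z b)"] by (simp add: mult.commute)
      finally show ?thesis .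
    qed
    have ii: "(\<Prod>p\<in>PP N. x (\<sigma> (fst p)) - q * x (\<sigma> (snd p))) = V (\<lambda>a. x (\<sigma> a)) * (\<Prod>p\<in>PP N. rr q x (\<sigma> (fst p)) (\<sigma> (snd p)))"
    proof -
      have "(\<Prod>p\<in>PP N. x (\<sigma> (fst p)) - q * x (\<sigma> (snd p))) = (\<Prod>p\<in>PP N. (x (\<sigma> (fst p)) - x (\<sigma> (snd p))) * rr q x (\<sigma> (fst p)) (\<sigma> (snd p)))"
      proof (rule prod.cong[OF refl])
        fix p assume p: "p \<in> PP N"
        have "x (\<sigma> (fst p)) \<noteq> x (\<sigma> (snd p))"
          using sd[OF p] injx sig PPin[OF p] by (meson inj_onD)
        then show "x (\<sigma> (fst p)) - q * x (\<sigma> (snd p)) = (x (\<sigma> (fst p)) - x (\<sigma> (snd p))) * rr q x (\<sigma> (fst p)) (\<sigma> (snd p))"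
          unfolding rr_def by simp
      qed
      then show ?thesis unfolding V_def by (simp add: prod.distrib)
    qed
    have iii: "of_int (sign \<sigma>) * V (\<lambda>a. x (\<sigma> a)) = V x"
    proof -
      have "V (\<lambda>a. x (\<sigma> a)) = of_int (sign \<sigma>) * V x" using Vperm[OF s] unfolding V_def by blast
      moreover have "(of_int (sign \<sigma>) :: complex) * of_int (sign \<sigma>) = 1"
        by (metis of_int_1 of_int_mult sign_idempotent)
      ultimately show ?thesis by (simp add: mult.assoc[symmetric])
    qed
    have iv: "(\<Prod>p\<in>PP N. rr q x (\<sigma> (fst p)) (\<sigma> (snd p))) = Rl q x L"
    proof -
      have "Rl q x L = (\<Prod>i\<in>{1..<Suc N}. \<Prod>j\<in>{i<..<Suc N}. rr q x (\<sigma> i) (\<sigma> j))"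
        unfolding L_def by (rule Rl_upt)
      also have "\<dots> = (\<Prod>i\<in>{1..N}. \<Prod>j\<in>{i<..N}. rr q x (\<sigma> i) (\<sigma> j))"
      proof -
        have e1: "{1..<Suc N} = {1..N}" by auto
        have e2: "{i<..<Suc N} = {i<..N}" for i by auto
        show ?thesis unfolding e1 e2 ..
      qed
      finally show ?thesis unfolding prodPP by simp
    qed
    have sm: "\<sigma> \<in> {\<sigma>. \<sigma> permutes {1..N}}" using s by simp
    have Lpos: "L \<in> permutations_of_set {1..N}"
      using bij_betw_apply[OF perm_list_bij sm] unfolding L_def .
    have ZL: "prod_list (map z L) = Z"
      using Lpos unfolding Z_def permutations_of_set_def
      by (auto simp: prod.distinct_set_conv_list[symmetric])
    have Lne: "L \<noteq> []" using N1 unfolding L_def by simp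
    have v: "Fsig N q z \<sigma> = Af q z L / Z"
    proof -
      have Z1: "1 - Z \<noteq> 0"
      proof -
        have "norm Z < 1" unfolding Z_def using norm_prod_lt1[of "{1..N}" z] N1 nz by auto
        then show ?thesis by auto
      qed
      have F: "Fsig N q z \<sigma> = 1 / (1 - Z) * Dl q z L"
        unfolding Fsig_def Phi_list[OF N1] L_def[symmetric] ZL Cl_Dl[OF Lne] ..
      have A: "Af q z L = Z / (1 - Z) * Dl q z L"
        using Af_Dl[OF Lne, of q z] unfolding uL_def ZL .
      have "Af q z L / Z = Dl q z L / (1 - Z)" unfolding A using Z0 by simp
      then show ?thesis unfolding F by simp
    qed
    show ?thesis
      unfolding i ii v L_def[symmetric] iv[symmetric]
      using iii Z0 by (simp add: field_simps)
  qed
  have "(\<Sum>\<sigma> | \<sigma> permutes {1..N}.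
            of_int (sign \<sigma>) *
            (\<Prod>i\<in>{1..N}. \<Prod>j\<in>{i<..N}.
               (z (\<sigma> i) - q * z (\<sigma> j) - (1 - q) * z (\<sigma> i) * z (\<sigma> j))) *
            Fsig N q z \<sigma>)
      = (\<Sum>\<sigma> | \<sigma> permutes {1..N}. V x * K / Z * (Rl q x (map \<sigma> [1..<Suc N]) * Af q z (map \<sigma> [1..<Suc N])))"
    by (intro sum.cong refl summand) simp
  also have "\<dots> = V x * K / Z * (\<Sum>\<sigma> | \<sigma> permutes {1..N}. Rl q x (map \<sigma> [1..<Suc N]) * Af q z (map \<sigma> [1..<Suc N]))"
    by (rule sum_distrib_left[symmetric])
  also have "(\<Sum>\<sigma> | \<sigma> permutes {1..N}. Rl q x (map \<sigma> [1..<Suc N]) * Af q z (map \<sigma> [1..<Suc N]))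
      = (\<Sum>L\<in>permutations_of_set {1..N}. Rl q x L * Af q z L)"
    using sum.reindex_bij_betw[OF perm_list_bij[of N], of "\<lambda>L. Rl q x L * Af q z L"] by simp
  also have "\<dots> = Z / P1"
    unfolding MCi unfolding Xp_def x_def Z_def P1_def by (simp add: prod_dividef)
  also have "V x * K / Z * (Z / P1) = (\<Prod>i\<in>{1..N}. \<Prod>j\<in>{i<..N}. (z i - z j)) / (\<Prod>i=1..N. (1 - z i))"
  proof -
    have "(\<Prod>i\<in>{1..N}. \<Prod>j\<in>{i<..N}. (z i - z j)) = (\<Prod>p\<in>PP N. (x (fst p) - x (snd p)) * ((1 - z (fst p)) * (1 - z (snd p))))"
      unfolding prodPP by (rule prod.cong[OF refl]) (use zd_id z1 PPin in \<open>simp add: x_def\<close>)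
    also have "\<dots> = V x * K" unfolding V_def K_def by (rule prod.distrib)
    finally show ?thesis using Z0 unfolding P1_def by simp
  qed
  finally show ?thesis .
qed


lemma vanish:
  fixes f :: "complex \<Rightarrow> complex"
  assumes c: "continuous (at \<zeta>0) f" and B: "finite B" and n0: "norm \<zeta>0 < 1"
    and z: "\<And>\<zeta>. norm \<zeta> < 1 \<Longrightarrow> \<zeta> \<notin> B \<Longrightarrow> f \<zeta> = 0"
  shows "f \<zeta>0 = 0"
proof -
  define U where "U = {\<zeta>::complex. norm \<zeta> < 1} - (B - {\<zeta>0})"
  have o1: "open {\<zeta>::complex. norm \<zeta> < 1}" by (rule open_Collect_less) (intro continuous_intros)+
  have oU: "open U" unfolding U_def using B o1 by (intro open_Diff) (auto intro: finite_imp_closed)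
  have inU: "\<zeta>0 \<in> U" unfolding U_def using n0 by auto
  have ev: "eventually (\<lambda>\<zeta>. \<zeta> \<in> U) (nhds \<zeta>0)" by (rule eventually_nhds_in_open[OF oU inU])
  have "eventually (\<lambda>\<zeta>. f \<zeta> = 0) (at \<zeta>0)"
    unfolding eventually_at_filter
    by (rule eventually_mono[OF ev]) (auto simp: U_def intro: z)
  then have "(f \<longlongrightarrow> 0) (at \<zeta>0)" by (simp add: tendsto_cong)
  moreover have "(f \<longlongrightarrow> f \<zeta>0) (at \<zeta>0)" using c by (simp add: continuous_at)
  ultimately show ?thesis using tendsto_unique[OF at_neq_bot] by metis
qed

lemma cont_upd: "continuous (at \<zeta>0) (\<lambda>\<zeta>. (z(c := \<zeta>)) a)"
proof (cases "a = c")
  case True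
  then have e: "(\<lambda>\<zeta>. (z(c := \<zeta>)) a) = (\<lambda>\<zeta>. \<zeta>)" by (simp add: fun_eq_iff)
  show ?thesis unfolding e by (rule continuous_ident)
next
  case False
  then have e: "(\<lambda>\<zeta>. (z(c := \<zeta>)) a) = (\<lambda>\<zeta>. z a)" by (simp add: fun_eq_iff)
  show ?thesis unfolding e by (rule continuous_const)
qed

lemma norm_upd_lt1:
  fixes z :: "nat \<Rightarrow> complex"
  assumes "norm \<zeta>0 < 1" "\<forall>i\<in>{1..N}. norm (z i) < 1" "a \<in> {1..N}"
  shows "norm ((z(c:=\<zeta>0)) a) < 1"
proof (cases "a = c")
  case True then show ?thesis using assms by simp
next
  case False then show ?thesis using assms by simp
qed

lemma norm_prod_upd:
  fixes z :: "nat \<Rightarrow> complex"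
  assumes s: "\<sigma> permutes {1..N}" and nz: "\<forall>i\<in>{1..N}. norm (z i) < 1" and n0: "norm \<zeta>0 < 1"
    and M: "1 \<le> M" "M \<le> N"
  shows "1 - (\<Prod>j=1..M. (z(c := \<zeta>0)) (\<sigma> j)) \<noteq> 0"
proof -
  have "norm (\<Prod>j=1..M. (z(c := \<zeta>0)) (\<sigma> j)) < 1"
  proof (rule norm_prod_lt1)
    show "finite {1..M}" by simp
    show "{1..M} \<noteq> {}" using M by simp
    show "\<forall>a\<in>{1..M}. norm ((z(c := \<zeta>0)) (\<sigma> a)) < 1"
    proof
      fix a assume a: "a \<in> {1..M}"
      then have a1: "a \<in> {1..N}" using M by auto
      have "\<sigma> a \<in> {1..N}" using a1 permutes_in_image[OF s] by blast
      then show "norm ((z(c := \<zeta>0)) (\<sigma> a)) < 1" by (rule norm_upd_lt1[OF n0 nz])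
    qed
  qed
  then show ?thesis by auto
qed

lemma cont_tvar:
  fixes z :: "nat \<Rightarrow> complex"
  assumes s: "\<sigma> permutes {1..N}" and nz: "\<forall>i\<in>{1..N}. norm (z i) < 1" and n0: "norm \<zeta>0 < 1"
  shows "continuous (at \<zeta>0) (\<lambda>\<zeta>. tvar N (\<lambda>i. (z(c := \<zeta>)) (\<sigma> i)) t)"
proof (cases "N - t = 0")
  case True
  then show ?thesis unfolding tvar_def by simp
next
  case False
  have ne: "1 - (\<Prod>j=1..N-t. (z(c := \<zeta>0)) (\<sigma> j)) \<noteq> 0"
    using norm_prod_upd[OF s nz n0, of "N - t" c] False by simp
  show ?thesis unfolding tvar_def
    apply (rule isCont_divide)
      apply (intro continuous_prod cont_upd)
     apply (intro continuous_diff continuous_const continuous_prod cont_upd)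
    using ne apply simp
    done
qed

lemma cont_LHS:
  fixes z :: "nat \<Rightarrow> complex"
  assumes N1: "N \<ge> 1" and nz: "\<forall>i\<in>{1..N}. norm (z i) < 1" and n0: "norm \<zeta>0 < 1"
  shows "continuous (at \<zeta>0) (\<lambda>\<zeta>. (\<Sum>\<sigma> | \<sigma> permutes {1..N}.
            of_int (sign \<sigma>) *
            (\<Prod>i\<in>{1..N}. \<Prod>j\<in>{i<..N}.
               ((z(c:=\<zeta>)) (\<sigma> i) - q * (z(c:=\<zeta>)) (\<sigma> j) - (1 - q) * (z(c:=\<zeta>)) (\<sigma> i) * (z(c:=\<zeta>)) (\<sigma> j))) *
            Fsig N q (z(c:=\<zeta>)) \<sigma>))"
proof (intro continuous_sum continuous_mult continuous_const continuous_prod cont_upd continuous_diff)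
  fix \<sigma> assume "\<sigma> \<in> {\<sigma>. \<sigma> permutes {1..N}}"
  then have s: "\<sigma> permutes {1..N}" by simp
  have ne: "1 - (\<Prod>j=1..N. (z(c := \<zeta>0)) (\<sigma> j)) \<noteq> 0"
    using norm_prod_upd[OF s nz n0, of N c] N1 by simp
  show "continuous (at \<zeta>0) (\<lambda>\<zeta>. Fsig N q (z(c := \<zeta>)) \<sigma>)"
    unfolding Fsig_def Phi_def
    apply (rule continuous_mult)
     apply (rule isCont_divide)
       apply (rule continuous_const)
      apply (intro continuous_diff continuous_const continuous_prod cont_upd)
    using ne apply simp
    apply (intro continuous_sum continuous_mult continuous_const continuous_prod cont_tvar[OF s nz n0])
    done
qed

lemma cont_RHS:
  fixes z :: "nat \<Rightarrow> complex"
  assumes nz: "\<forall>i\<in>{1..N}. norm (z i) < 1" and n0: "norm \<zeta>0 < 1"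
  shows "continuous (at \<zeta>0) (\<lambda>\<zeta>. (\<Prod>i\<in>{1..N}. \<Prod>j\<in>{i<..N}. ((z(c:=\<zeta>)) i - (z(c:=\<zeta>)) j)) / (\<Prod>i=1..N. (1 - (z(c:=\<zeta>)) i)))"
proof -
  have "(\<Prod>i=1..N. (1 - (z(c:=\<zeta>0)) i)) \<noteq> 0"
  proof -
    have "(z(c:=\<zeta>0)) i \<noteq> 1" if "i \<in> {1..N}" for i
    proof -
      have "norm ((z(c:=\<zeta>0)) i) < 1" using norm_upd_lt1[OF n0 nz that] .
      then show ?thesis by auto
    qed
    then show ?thesis by simp
  qed
  then show ?thesis
    apply -
    apply (rule isCont_divide)
      apply (intro continuous_prod continuous_diff cont_upd)
     apply (intro continuous_prod continuous_diff continuous_const cont_upd)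
    apply simp
    done
qed


theorem proposition2:
  fixes N :: nat and q :: complex and z :: "nat \<Rightarrow> complex"
  assumes "N \<ge> 1"
    and "\<forall>k\<in>{1..N}. qint q k \<noteq> 0"
    and "\<forall>i\<in>{1..N}. norm (z i) < 1"
  shows "(\<Sum>\<sigma> | \<sigma> permutes {1..N}.
            of_int (sign \<sigma>) *
            (\<Prod>i\<in>{1..N}. \<Prod>j\<in>{i<..N}.
               (z (\<sigma> i) - q * z (\<sigma> j) - (1 - q) * z (\<sigma> i) * z (\<sigma> j))) *
            Fsig N q z \<sigma>)
         = (\<Prod>i\<in>{1..N}. \<Prod>j\<in>{i<..N}. (z i - z j)) / (\<Prod>i=1..N. (1 - z i))"
proof -
  note N1 = assms(1) and qi = assms(2)
  define LHS where "LHS w = (\<Sum>\<sigma> | \<sigma> permutes {1..N}.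
            of_int (sign \<sigma>) *
            (\<Prod>i\<in>{1..N}. \<Prod>j\<in>{i<..N}.
               (w (\<sigma> i) - q * w (\<sigma> j) - (1 - q) * w (\<sigma> i) * w (\<sigma> j))) *
            Fsig N q w \<sigma>)" for w :: "nat \<Rightarrow> complex"
  define RHS where "RHS w = (\<Prod>i\<in>{1..N}. \<Prod>j\<in>{i<..N}. (w i - w j)) / (\<Prod>i=1..N. (1 - w i))" for w :: "nat \<Rightarrow> complex"
  define G where "G k w \<longleftrightarrow> (\<forall>i\<in>{1..N}. norm (w i) < 1) \<and> inj_on w {k<..N} \<and> (\<forall>i\<in>{k<..N}. w i \<noteq> 0)
      \<and> (\<forall>i\<in>{k<..N}. \<forall>j\<in>{1..k}. w i \<noteq> w j)" for k and w :: "nat \<Rightarrow> complex"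
  have C: "k \<le> N \<Longrightarrow> G k w \<Longrightarrow> LHS w = RHS w" for k w
  proof (induction k arbitrary: w)
    case 0
    have e: "{0<..N} = {1..N}" by auto
    show ?case unfolding LHS_def RHS_def
      by (rule generic[OF N1 qi]) (use 0 in \<open>simp_all add: G_def e\<close>)
  next
    case (Suc k)
    define c where "c = Suc k"
    have kN: "k \<le> N" using Suc.prems by simp
    have cN: "c \<in> {1..N}" using Suc.prems c_def by simp
    have Gw: "G (Suc k) w" using Suc.prems by simp
    have nw: "\<forall>i\<in>{1..N}. norm (w i) < 1" using Gw G_def by simp
    define B where "B = insert 0 (w ` ({1..N} - {c}))"
    have fB: "finite B" unfolding B_def by simp
    define f where "f \<zeta> = LHS (w(c := \<zeta>)) - RHS (w(c := \<zeta>))" for \<zeta>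
    have n0: "norm (w c) < 1" using nw cN by blast
    have fz: "f \<zeta> = 0" if \<zeta>: "norm \<zeta> < 1" "\<zeta> \<notin> B" for \<zeta>
    proof -
      have e: "{k<..N} = insert c {c<..N}" using cN c_def by auto
      have "G k (w(c := \<zeta>))" unfolding G_def
      proof (intro conjI)
        show "\<forall>i\<in>{1..N}. norm ((w(c := \<zeta>)) i) < 1" using nw \<zeta> by auto
        have injc: "inj_on w {c<..N}" using Gw unfolding G_def c_def by simp
        have "inj_on (w(c := \<zeta>)) {c<..N}" using injc by (simp add: inj_on_def)
        moreover have "\<zeta> \<notin> (w(c := \<zeta>)) ` ({c<..N} - {c})" using \<zeta>(2) unfolding B_def by auto
        ultimately show "inj_on (w(c := \<zeta>)) {k<..N}" unfolding e by simp
        show "\<forall>i\<in>{k<..N}. (w(c := \<zeta>)) i \<noteq> 0"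
          using Gw \<zeta>(2) unfolding G_def B_def e c_def by auto
        show "\<forall>i\<in>{k<..N}. \<forall>j\<in>{1..k}. (w(c := \<zeta>)) i \<noteq> (w(c := \<zeta>)) j"
        proof (intro ballI)
          fix i j assume i: "i \<in> {k<..N}" and j: "j \<in> {1..k}"
          have jc: "j \<noteq> c" using j c_def by auto
          show "(w(c := \<zeta>)) i \<noteq> (w(c := \<zeta>)) j"
          proof (cases "i = c")
            case True
            have "j \<in> {1..N} - {c}" using j jc cN c_def by auto
            then have "w j \<in> B" unfolding B_def by blast
            then have "\<zeta> \<noteq> w j" using \<zeta>(2) by blast
            then show ?thesis using True jc by simp
          next
            case False
            then have "i \<in> {Suc k<..N}" using i c_def by auto
            moreover have "j \<in> {1..Suc k}" using j by auto
            ultimately have "w i \<noteq> w j" using Gw unfolding G_def by blast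
            then show ?thesis using False jc by simp
          qed
        qed
      qed
      then show ?thesis unfolding f_def using Suc.IH[OF kN] by simp
    qed
    have cont: "continuous (at (w c)) f"
      unfolding f_def LHS_def RHS_def
      by (intro continuous_diff cont_LHS[OF N1 nw n0] cont_RHS[OF nw n0])
    have "f (w c) = 0" by (rule vanish[OF cont fB n0 fz])
    then show ?case unfolding f_def by simp
  qed
  have "G N z" unfolding G_def using assms(3) by simp
  then have "LHS z = RHS z" by (rule C[OF order_refl])
  then show ?thesis unfolding LHS_def RHS_def .
qed


end
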